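(* Let $d$ be a thin dimension vector with $e=e(d)\ge 2$, $J=J(d)$, $K=\operatorname{supp} d\setminus J$, $T=\Delta(J)$, $S=\Delta(K)$. Let $A$ be the set of pairs $(i,j)$ consisting of: all $(i,j)$ with $i<j$ consecutive elements of $K$; all $(i,j)$ with $i<j$ consecutive elements of $J$ except the pairs $(b_m-1,b_m+2)$ for $2\le m\le e$; and the pairs $(b_m,b_m+2)$ for $1\le m\le e$. For $(t_2,\dots,t_e)\in(k^\times)^{e-1}$ put $$\mathcal F(t_2,\dots,t_e)=\sum_{(i,j)\in A}f_{i,j}+\sum_{m=2}^{e}t_m f_{b_m-1,b_m+2}\in\mathfrak n.$$ Then the $\mathcal A_{t,1}$-module $M(\mathcal F(t_2,\dots,t_e))$ fits into a non-split short exact sequence $0\to S\to M(\mathcal F(t_2,\dots,t_e))\to T\to 0$.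
   Context: Let $k$ be an algebraically closed field. A thin dimension vector is $d=(d_1,\dots,d_t)\in\{0,1\}^t$ with $d_1=d_t=1$ and no two consecutive entries equal to $0$; $\operatorname{supp} d=\{i: d_i=1\}$ and $n=\#\operatorname{supp} d$. Write its entries as maximal strings of consecutive ones of lengths $a_0,a_1,\dots,a_{r+1}$ (in order, separated by single zeros); the strings of lengths $a_1,\dots,a_r$ are called internal, and $e(d)=\#\{1\le i\le r: a_i\text{ even}\}$. Let $b_1<\dots<b_{e(d)}$ be the positions of the last entries of the internal strings of even length. Define $J(d)$ as the set of $j\in\{1,\dots,t\}$ such that either $j\le b_1-1$ and $j\equiv b_1-1\pmod 2$; or $b_i+2\le j\le b_{i+1}-1$ and $j\equiv b_i \pmod 2$ for some $1\le i<e(d)$; or $j\ge b_{e(d)}+2$ and $j\equiv b_{e(d)}\pmod 2$. Label a basis of $k^n$ as $\{f_j: j\in\operatorname{supp} d\}$, with $f_j$ the $m$-th standard basis vector if $j$ is the $m$-th smallest element of $\operatorname{supp} d$; $f_{i,j}$ sends $f_j\mapsto f_i$ and other $f_{j'}$ to $0$. Let $V_i=\mathrm{span}\{f_j: j\in\operatorname{supp} d, j\le i\}$ ($V_i=0$ for $i\le 0$) and $\mathfrak n=\{x\in\mathrm{End}(k^n): x(V_i)\subseteq V_{i-2}\ \forall i\}$. $\mathcal A_{t,1}$ is the quotient of the path algebra over $k$ of the quiver with vertices $1,\dots,t$, arrows $\alpha_i:i\to i+1$ ($1\le i\le t-1$) and $\beta_j:j+2\to j$ ($1\le j\le t-2$),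 by the relations $\beta_1\alpha_2=0$ and $\beta_{i+1}\alpha_{i+2}=\alpha_i\beta_i$ for $1\le i\le t-3$ (compositions right to left); modules are representations satisfying these relations. For $x\in\mathfrak n$, $M(x)$ is the module with $M(x)_i=V_i$, $\alpha_i$ the inclusion $V_i\hookrightarrow V_{i+1}$, and $\beta_j=x|_{V_{j+2}}:V_{j+2}\to V_j$. A subset $J\subseteq\{1,\dots,t\}$ is standard if $j\in J\Rightarrow j+1\notin J$. For nonempty standard $J$, $\Delta(J)_i=k^{l}$ with $l=\#\{j\in J: j\le i\}$ and basis $e_1,\dots,e_l$; $\alpha_i$ is the inclusion $e_h\mapsto e_h$, and $\beta_j(e_h)=e_{h-1}$ for $h\ge 2$, $\beta_j(e_1)=0$. *)

theory Defs
  imports "HOL-Computational_Algebra.Polynomial" "Jordan_Normal_Form.Matrix"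
begin

definition alg_closed :: "'a::field itself \<Rightarrow> bool" where
  "alg_closed _ \<longleftrightarrow> (\<forall>p::'a poly. degree p \<ge> 1 \<longrightarrow> (\<exists>x. poly p x = 0))"

text \<open>A dimension vector d = (d_1,...,d_t) is encoded by t and a function d on nat;
  only the values d 1, ..., d t matter.\<close>

definition thin :: "nat \<Rightarrow> (nat \<Rightarrow> nat) \<Rightarrow> bool" where
  "thin t d \<longleftrightarrow> t \<ge> 1 \<and> (\<forall>i\<in>{1..t}. d i \<in> {0,1}) \<and> d 1 = 1 \<and> d t = 1 \<and>
     (\<forall>i. 1 \<le> i \<and> i < t \<longrightarrow> d i = 1 \<or> d (Suc i) = 1)"

definition supp :: "nat \<Rightarrow> (nat \<Rightarrow> nat) \<Rightarrow> nat set" where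
  "supp t d = {i\<in>{1..t}. d i = 1}"

text \<open>b is the last entry of an internal string (maximal string of ones not containing
  position 1 or t) of even length.\<close>

definition even_internal_end :: "nat \<Rightarrow> (nat \<Rightarrow> nat) \<Rightarrow> nat \<Rightarrow> bool" where
  "even_internal_end t d b \<longleftrightarrow> b \<in> supp t d \<and> b < t \<and> d (Suc b) = 0 \<and>
     (\<exists>s. 1 < s \<and> s \<le> b \<and> d (s - 1) = 0 \<and> (\<forall>j\<in>{s..b}. d j = 1) \<and> even (b - s + 1))"

definition bset :: "nat \<Rightarrow> (nat \<Rightarrow> nat) \<Rightarrow> nat set" where
  "bset t d = {b. even_internal_end t d b}"

definition e_of :: "nat \<Rightarrow> (nat \<Rightarrow> nat) \<Rightarrow> nat" where
  "e_of t d = card (bset t d)"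

text \<open>b_of t d m = b_m (1-based: b_1 < ... < b_e).\<close>
definition b_of :: "nat \<Rightarrow> (nat \<Rightarrow> nat) \<Rightarrow> nat \<Rightarrow> nat" where
  "b_of t d m = sorted_list_of_set (bset t d) ! (m - 1)"

definition J_of :: "nat \<Rightarrow> (nat \<Rightarrow> nat) \<Rightarrow> nat set" where
  "J_of t d = {j\<in>{1..t}.
      (j \<le> b_of t d 1 - 1 \<and> j mod 2 = (b_of t d 1 - 1) mod 2)
    \<or> (\<exists>i. 1 \<le> i \<and> i < e_of t d \<and> b_of t d i + 2 \<le> j \<and> j \<le> b_of t d (Suc i) - 1
           \<and> j mod 2 = b_of t d i mod 2)
    \<or> (j \<ge> b_of t d (e_of t d) + 2 \<and> j mod 2 = b_of t d (e_of t d) mod 2)}"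

text \<open>A representation: dimension of the space at each vertex (spaces are k^dim),
  matrices for alpha_i : i \<rightarrow> i+1 and beta_j : j+2 \<rightarrow> j.\<close>

record 'a rep =
  rdim :: "nat \<Rightarrow> nat"
  ralpha :: "nat \<Rightarrow> 'a mat"
  rbeta :: "nat \<Rightarrow> 'a mat"

definition incl_mat :: "nat \<Rightarrow> nat \<Rightarrow> 'a::field mat" where
  "incl_mat m n = mat m n (\<lambda>(r,c). if r = c then 1 else 0)"

text \<open>Delta(J): dimension l_i = #{j in J. j \<le> i}, alpha the inclusion e_h \<mapsto> e_h,
  beta e_h \<mapsto> e_{h-1} (and e_1 \<mapsto> 0); coordinates are 0-based.\<close>

definition Delta :: "nat set \<Rightarrow> 'a::field rep" where
  "Delta J = (let l = (\<lambda>i. card {j\<in>J. j \<le> i}) in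
     \<lparr> rdim = l,
       ralpha = (\<lambda>i. incl_mat (l (Suc i)) (l i)),
       rbeta = (\<lambda>j. mat (l j) (l (j+2)) (\<lambda>(r,c). if c = Suc r then 1 else 0)) \<rparr>)"

text \<open>Basis f_j (j in supp d) of k^n: f_j is the standard basis vector with 0-based
  index idx j = #{j' in supp. j' < j}. Thus V_i is spanned by the first vdim i coordinates.\<close>

definition idx :: "nat \<Rightarrow> (nat \<Rightarrow> nat) \<Rightarrow> nat \<Rightarrow> nat" where
  "idx t d j = card {j'\<in>supp t d. j' < j}"

definition vdim :: "nat \<Rightarrow> (nat \<Rightarrow> nat) \<Rightarrow> nat \<Rightarrow> nat" where
  "vdim t d i = card {j\<in>supp t d. j \<le> i}"

definition nvec :: "nat \<Rightarrow> (nat \<Rightarrow> nat) \<Rightarrow> nat" where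
  "nvec t d = card (supp t d)"

text \<open>v \<in> V_i (V_i = 0 for i \<le> 0; the nat subtraction i - 2 truncates to 0).\<close>
definition inV :: "nat \<Rightarrow> (nat \<Rightarrow> nat) \<Rightarrow> nat \<Rightarrow> 'a::field vec \<Rightarrow> bool" where
  "inV t d i v \<longleftrightarrow> v \<in> carrier_vec (nvec t d) \<and> (\<forall>r<nvec t d. vdim t d i \<le> r \<longrightarrow> v $ r = 0)"

definition nilp :: "nat \<Rightarrow> (nat \<Rightarrow> nat) \<Rightarrow> 'a::field mat set" where
  "nilp t d = {x \<in> carrier_mat (nvec t d) (nvec t d).
      \<forall>i v. inV t d i v \<longrightarrow> inV t d (i - 2) (x *\<^sub>v v)}"

definition fmat :: "nat \<Rightarrow> (nat \<Rightarrow> nat) \<Rightarrow> nat \<Rightarrow> nat \<Rightarrow> 'a::field mat" where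
  "fmat t d i j = mat (nvec t d) (nvec t d)
     (\<lambda>(r,c). if r = idx t d i \<and> c = idx t d j then 1 else 0)"

text \<open>M(x): M_i = V_i, alpha the inclusions, beta_j = x restricted to V_{j+2} (into V_j).\<close>
definition Mx :: "nat \<Rightarrow> (nat \<Rightarrow> nat) \<Rightarrow> 'a::field mat \<Rightarrow> 'a rep" where
  "Mx t d x = (let l = vdim t d in
     \<lparr> rdim = l,
       ralpha = (\<lambda>i. incl_mat (l (Suc i)) (l i)),
       rbeta = (\<lambda>j. mat (l j) (l (j+2)) (\<lambda>(r,c). x $$ (r,c))) \<rparr>)"

definition is_hom :: "nat \<Rightarrow> 'a::field rep \<Rightarrow> 'a rep \<Rightarrow> (nat \<Rightarrow> 'a mat) \<Rightarrow> bool" where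
  "is_hom t R R' f \<longleftrightarrow>
     (\<forall>i\<in>{1..t}. f i \<in> carrier_mat (rdim R' i) (rdim R i)) \<and>
     (\<forall>i. 1 \<le> i \<and> i + 1 \<le> t \<longrightarrow> f (Suc i) * ralpha R i = ralpha R' i * f i) \<and>
     (\<forall>j. 1 \<le> j \<and> j + 2 \<le> t \<longrightarrow> f j * rbeta R j = rbeta R' j * f (j + 2))"

definition short_exact :: "nat \<Rightarrow> 'a::field rep \<Rightarrow> 'a rep \<Rightarrow> 'a rep \<Rightarrow>
    (nat \<Rightarrow> 'a mat) \<Rightarrow> (nat \<Rightarrow> 'a mat) \<Rightarrow> bool" where
  "short_exact t S M T f g \<longleftrightarrow> is_hom t S M f \<and> is_hom t M T g \<and>
     (\<forall>i\<in>{1..t}.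
        (\<forall>u\<in>carrier_vec (rdim S i). f i *\<^sub>v u = 0\<^sub>v (rdim M i) \<longrightarrow> u = 0\<^sub>v (rdim S i)) \<and>
        (\<forall>w\<in>carrier_vec (rdim T i). \<exists>v\<in>carrier_vec (rdim M i). g i *\<^sub>v v = w) \<and>
        (\<forall>v\<in>carrier_vec (rdim M i). g i *\<^sub>v v = 0\<^sub>v (rdim T i) \<longleftrightarrow>
            (\<exists>u\<in>carrier_vec (rdim S i). v = f i *\<^sub>v u)))"

definition splits :: "nat \<Rightarrow> 'a::field rep \<Rightarrow> 'a rep \<Rightarrow> (nat \<Rightarrow> 'a mat) \<Rightarrow> bool" where
  "splits t M T g \<longleftrightarrow> (\<exists>s. is_hom t T M s \<and> (\<forall>i\<in>{1..t}. g i * s i = 1\<^sub>m (rdim T i)))"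

definition consec :: "nat set \<Rightarrow> (nat \<times> nat) set" where
  "consec X = {(i,j). i \<in> X \<and> j \<in> X \<and> i < j \<and> \<not> (\<exists>k\<in>X. i < k \<and> k < j)}"

definition A_set :: "nat \<Rightarrow> (nat \<Rightarrow> nat) \<Rightarrow> (nat \<times> nat) set" where
  "A_set t d = (let J = J_of t d; K = supp t d - J; e = e_of t d; b = b_of t d in
     consec K
     \<union> (consec J - {(b m - 1, b m + 2) | m. 2 \<le> m \<and> m \<le> e})
     \<union> {(b m, b m + 2) | m. 1 \<le> m \<and> m \<le> e})"

definition Fmat :: "nat \<Rightarrow> (nat \<Rightarrow> nat) \<Rightarrow> (nat \<Rightarrow> 'a::field) \<Rightarrow> 'a mat" where
  "Fmat t d tt = mat (nvec t d) (nvec t d) (\<lambda>rc.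
      (\<Sum>p\<in>A_set t d. fmat t d (fst p) (snd p) $$ rc)
    + (\<Sum>m\<in>{2..e_of t d}. tt m * fmat t d (b_of t d m - 1) (b_of t d m + 2) $$ rc))"

end

theory Submission
  imports Defs
begin
definition cnt :: "nat set \<Rightarrow> nat \<Rightarrow> nat" where
  "cnt X p = card {j\<in>X. j < p}"
definition lecnt :: "nat set \<Rightarrow> nat \<Rightarrow> nat" where
  "lecnt X i = card {j\<in>X. j \<le> i}"
definition nthX :: "nat set \<Rightarrow> nat \<Rightarrow> nat" where
  "nthX X c = inv_into X (cnt X) c"

lemma cnt_lt_lecnt:
  assumes "finite X" "a \<in> X"
  shows "cnt X a < lecnt X i \<longleftrightarrow> a \<le> i"
proof
  assume "a \<le> i"
  have "{j\<in>X. j < a} \<subset> {j\<in>X. j \<le> i}" using assms \<open>a \<le> i\<close> by auto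
  then show "cnt X a < lecnt X i" unfolding cnt_def lecnt_def
    by (intro psubset_card_mono) (use assms in auto)
next
  assume h: "cnt X a < lecnt X i"
  show "a \<le> i"
  proof (rule ccontr)
    assume "\<not> a \<le> i"
    then have "{j\<in>X. j \<le> i} \<subseteq> {j\<in>X. j < a}" by auto
    then have "lecnt X i \<le> cnt X a" unfolding cnt_def lecnt_def
      by (intro card_mono) (use assms in auto)
    with h show False by simp
  qed
qed

lemma cnt_strict:
  assumes "finite X" "a \<in> X" "a' \<in> X" "a < a'"
  shows "cnt X a < cnt X a'"
proof -
  have "{j\<in>X. j < a} \<subset> {j\<in>X. j < a'}" using assms by auto
  then show ?thesis unfolding cnt_def
    by (intro psubset_card_mono) (use assms in auto)
qed

lemma cnt_less_iff:
  assumes "finite X" "a \<in> X" "a' \<in> X"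
  shows "cnt X a < cnt X a' \<longleftrightarrow> a < a'"
  using cnt_strict[OF assms(1) assms(2,3)] cnt_strict[OF assms(1) assms(3,2)]
  by (metis less_asym nat_neq_iff)

lemma cnt_inj: "finite X \<Longrightarrow> inj_on (cnt X) X"
  unfolding inj_on_def by (metis cnt_strict less_irrefl nat_neq_iff)

lemma cnt_lt_card: "finite X \<Longrightarrow> a \<in> X \<Longrightarrow> cnt X a < card X"
  unfolding cnt_def by (intro psubset_card_mono) auto

lemma cnt_image: assumes "finite X" shows "cnt X ` X = {0..<card X}"
proof -
  have sub: "cnt X ` X \<subseteq> {0..<card X}" using cnt_lt_card[OF assms] by auto
  have "card (cnt X ` X) = card X" using card_image[OF cnt_inj[OF assms]] .
  then show ?thesis using sub by (intro card_subset_eq) auto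
qed

lemma nthX_props:
  assumes "finite X" "c < card X"
  shows "nthX X c \<in> X" "cnt X (nthX X c) = c"
proof -
  have "c \<in> cnt X ` X" using cnt_image[OF assms(1)] assms(2) by auto
  then show "nthX X c \<in> X" "cnt X (nthX X c) = c" unfolding nthX_def
    by (auto intro: inv_into_into f_inv_into_f)
qed

lemma nthX_cnt: "finite X \<Longrightarrow> a \<in> X \<Longrightarrow> nthX X (cnt X a) = a"
  unfolding nthX_def by (rule inv_into_f_f[OF cnt_inj])

lemma lecnt_le_card: "finite X \<Longrightarrow> lecnt X i \<le> card X"
  unfolding lecnt_def by (intro card_mono) auto

lemma consec_iff:
  assumes "finite X"
  shows "(a,p) \<in> consec X \<longleftrightarrow> a \<in> X \<and> p \<in> X \<and> cnt X p = Suc (cnt X a)"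
proof
  assume h: "(a,p) \<in> consec X"
  then have a: "a \<in> X" "p \<in> X" "a < p" and nb: "\<And>k. k \<in> X \<Longrightarrow> a < k \<Longrightarrow> k < p \<Longrightarrow> False"
    unfolding consec_def by auto
  have "{j\<in>X. j < p} = insert a {j\<in>X. j < a}"
    using a nb by (auto, meson linorder_neqE_nat)
  then have "cnt X p = Suc (cnt X a)" unfolding cnt_def using assms by simp
  then show "a \<in> X \<and> p \<in> X \<and> cnt X p = Suc (cnt X a)" using a by simp
next
  assume h: "a \<in> X \<and> p \<in> X \<and> cnt X p = Suc (cnt X a)"
  then have ap: "a < p" using cnt_less_iff[OF assms, of a p] by simp
  have "\<not> (\<exists>k\<in>X. a < k \<and> k < p)"
  proof
    assume "\<exists>k\<in>X. a < k \<and> k < p"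
    then obtain k where k: "k \<in> X" "a < k" "k < p" by blast
    have "cnt X a < cnt X k" using cnt_strict[OF assms, of a k] k h by auto
    moreover have "cnt X k < cnt X p" using cnt_strict[OF assms, of k p] k h by auto
    ultimately show False using h by simp
  qed
  then show "(a,p) \<in> consec X" unfolding consec_def using h ap by auto
qed

lemma even_diff_mod: assumes "(x::nat) \<le> y" "even (y - x)" shows "x mod 2 = y mod 2"
proof -
  obtain k where k: "y - x = 2 * k" using assms(2) by blast
  then have "y = x + 2 * k" using assms(1) by simp
  then show ?thesis by simp
qed

locale thinloc =
  fixes t :: nat and d :: "nat \<Rightarrow> nat"
  assumes thin: "thin t d" and e2: "e_of t d \<ge> 2"
begin

abbreviation "B \<equiv> bset t d"
abbreviation "e \<equiv> e_of t d"
abbreviation "b \<equiv> b_of t d"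
abbreviation "J \<equiv> J_of t d"
abbreviation "S \<equiv> supp t d"

lemma t1: "t \<ge> 1" and d1: "d 1 = 1" and dt: "d t = 1"
  and d01: "\<And>i. i \<in> {1..t} \<Longrightarrow> d i \<noteq> 1 \<Longrightarrow> d i = 0"
  and dcons: "\<And>i. 1 \<le> i \<Longrightarrow> i < t \<Longrightarrow> d i = 1 \<or> d (Suc i) = 1"
  using thin unfolding thin_def by auto

lemma S_sub: "S \<subseteq> {1..t}" and finS: "finite S"
  unfolding supp_def by auto

lemma B_sub: "B \<subseteq> {1..t}"
  unfolding bset_def even_internal_end_def supp_def by auto

lemma finB: "finite B" using B_sub finite_subset by blast

lemma B_start:
  assumes "bb \<in> B"
  shows "\<exists>s. 1 < s \<and> s + 1 \<le> bb \<and> d (s - 1) = 0 \<and> (\<forall>j\<in>{s..bb}. d j = 1) \<and> (s - 1) mod 2 = bb mod 2"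
proof -
  from assms obtain s where s: "1 < s" "s \<le> bb" "d (s - 1) = 0" "\<forall>j\<in>{s..bb}. d j = 1" "even (bb - s + 1)"
    unfolding bset_def even_internal_end_def by auto
  have "s + 1 \<le> bb" using s(2,5) by (cases "s = bb") auto
  moreover have "(s - 1) mod 2 = bb mod 2"
    by (rule even_diff_mod) (use s(1,2,5) in auto)
  ultimately show ?thesis using s by blast
qed

lemma B_props:
  assumes "bb \<in> B"
  shows "3 \<le> bb" "bb + 2 \<le> t" "d bb = 1" "d (bb - 1) = 1" "d (Suc bb) = 0" "bb \<in> S"
    "bb + 1 \<notin> S"
proof -
  obtain s where s: "1 < s" "s + 1 \<le> bb" "d (s - 1) = 0" "\<forall>j\<in>{s..bb}. d j = 1"
    using B_start[OF assms] by blast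
  have b1: "bb \<in> S" "bb < t" "d (Suc bb) = 0" using assms unfolding bset_def even_internal_end_def by auto
  show "3 \<le> bb" using s by simp
  show "d bb = 1" "d (bb - 1) = 1" using s by auto
  show "d (Suc bb) = 0" "bb \<in> S" using b1 by auto
  have "Suc bb \<noteq> t" using b1 dt by auto
  then show "bb + 2 \<le> t" using b1 by simp
  show "bb + 1 \<notin> S" using b1 unfolding supp_def by auto
qed

lemma B_gap:
  assumes "bb \<in> B" "bb' \<in> B" "bb < bb'"
  shows "bb + 3 \<le> bb'"
proof -
  have "d (Suc bb) = 0" "d bb' = 1" "d (bb' - 1) = 1" using B_props assms by auto
  then have "bb' \<noteq> Suc bb" "bb' - 1 \<noteq> Suc bb" by auto
  then show ?thesis using assms(3) by linarith
qed

definition L where "L = sorted_list_of_set B"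

lemma L_props: "length L = e" "set L = B" "sorted_wrt (<) L"
  unfolding L_def e_of_def using finB by (auto intro: strict_sorted_list_of_set)

lemma b_L: "b m = L ! (m - 1)" unfolding b_of_def L_def by simp

lemma b_in: "1 \<le> m \<Longrightarrow> m \<le> e \<Longrightarrow> b m \<in> B"
proof -
  assume "1 \<le> m" "m \<le> e"
  then have "m - 1 < length L" using L_props by simp
  then have "L ! (m - 1) \<in> set L" by (rule nth_mem)
  then show ?thesis using L_props by (simp add: b_L)
qed

lemma b_mono: "1 \<le> m \<Longrightarrow> m < m' \<Longrightarrow> m' \<le> e \<Longrightarrow> b m < b m'"
proof -
  assume "1 \<le> m" "m < m'" "m' \<le> e"
  then have "m - 1 < m' - 1" "m' - 1 < length L" using L_props by auto
  then show ?thesis unfolding b_L using sorted_wrt_nth_less[OF L_props(3)] by blast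
qed

lemma b_mono_iff: "1 \<le> m \<Longrightarrow> m \<le> e \<Longrightarrow> 1 \<le> m' \<Longrightarrow> m' \<le> e \<Longrightarrow> b m < b m' \<longleftrightarrow> m < m'"
  by (metis b_mono less_asym nat_neq_iff)

lemma b_inj: "1 \<le> m \<Longrightarrow> m \<le> e \<Longrightarrow> 1 \<le> m' \<Longrightarrow> m' \<le> e \<Longrightarrow> b m = b m' \<longleftrightarrow> m = m'"
  by (metis b_mono less_irrefl nat_neq_iff)

lemma B_b: assumes "bb \<in> B" shows "\<exists>m. 1 \<le> m \<and> m \<le> e \<and> b m = bb"
proof -
  from assms L_props obtain i where "i < e" "L ! i = bb" by (metis in_set_conv_nth)
  then show ?thesis by (intro exI[of _ "Suc i"]) (auto simp: b_L)
qed

lemma Z: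
  assumes "z' \<in> {1..t}" "d z' = 0"
  shows "z \<in> {1..t} \<Longrightarrow> d z = 0 \<Longrightarrow> z \<le> z' \<Longrightarrow> (\<forall>bb\<in>B. \<not> (z \<le> bb \<and> bb < z')) \<Longrightarrow> z mod 2 = z' mod 2"
  using assms
proof (induction z' rule: less_induct)
  case (less z')
  show ?case
  proof (cases "z = z'")
    case True then show ?thesis by simp
  next
    case False
    then have zz: "z < z'" using less by simp
    define Y where "Y = {y. z \<le> y \<and> y < z' \<and> y \<in> {1..t} \<and> d y = 0}"
    have finY: "finite Y" unfolding Y_def by (rule finite_subset[of _ "{..<z'}"]) auto
    have zY: "z \<in> Y" unfolding Y_def using less zz by auto
    define y0 where "y0 = Max Y"
    have y0Y: "y0 \<in> Y" unfolding y0_def using finY zY Max_in by blast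
    have y0max: "\<And>y. y \<in> Y \<Longrightarrow> y \<le> y0" unfolding y0_def using finY by simp
    have y0: "z \<le> y0" "y0 < z'" "y0 \<in> {1..t}" "d y0 = 0" using y0Y unfolding Y_def by auto
    have between: "\<And>j. y0 < j \<Longrightarrow> j < z' \<Longrightarrow> d j = 1"
    proof -
      fix j assume j: "y0 < j" "j < z'"
      show "d j = 1"
      proof (rule ccontr)
        assume "d j \<noteq> 1"
        then have "d j = 0" using d01[of j] j y0 less.prems by auto
        then have "j \<in> Y" unfolding Y_def using j y0 less.prems by auto
        then show False using y0max j by fastforce
      qed
    qed
    have "d (Suc y0) = 1" using dcons[of y0] y0 less.prems by auto
    then have sy: "Suc y0 < z'" using y0 less.prems by (metis Suc_lessI zero_neq_one)
    have odd: "odd (z' - y0 - 1)"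
    proof
      assume ev: "even (z' - y0 - 1)"
      have "even_internal_end t d (z' - 1)"
        unfolding even_internal_end_def
      proof (intro conjI exI[of _ "Suc y0"])
        show "z' - 1 \<in> S" unfolding supp_def using between[of "z' - 1"] sy less.prems by auto
        show "z' - 1 < t" using less.prems sy by auto
        show "d (Suc (z' - 1)) = 0" using less.prems sy by auto
        show "1 < Suc y0" using y0 by auto
        show "Suc y0 \<le> z' - 1" using sy by auto
        show "d (Suc y0 - 1) = 0" using y0 by auto
        show "\<forall>j\<in>{Suc y0..z' - 1}. d j = 1" using between sy by auto
        show "even (z' - 1 - Suc y0 + 1)" using ev sy by (simp add: algebra_simps)
      qed
      then have "z' - 1 \<in> B" unfolding bset_def by simp
      moreover have "z \<le> z' - 1" "z' - 1 < z'" using y0(1) sy by auto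
      ultimately show False using less.prems(4) by blast
    qed
    then have "even (z' - Suc (Suc y0))" using sy by (simp add: algebra_simps)
    then have "Suc (Suc y0) mod 2 = z' mod 2" by (rule even_diff_mod[rotated]) (use sy in simp)
    then have p1: "y0 mod 2 = z' mod 2" by simp
    have nb: "\<forall>bb\<in>B. \<not> (z \<le> bb \<and> bb < y0)" using less.prems(4) y0(2) by auto
    have "z mod 2 = y0 mod 2"
      by (rule less.IH[OF y0(2) less.prems(1,2) y0(1) nb y0(3,4)])
    then show ?thesis using p1 by simp
  qed
qed

end

lemma par_aux: assumes "(x::nat) mod 2 = (y + 1) mod 2" "(y + m) mod 2 = c mod 2" shows "(x + Suc m) mod 2 = c mod 2"
proof -
  have "(x + Suc m) mod 2 = (x mod 2 + Suc m) mod 2" by (simp only: mod_add_left_eq)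
  also have "\<dots> = ((y + 1) mod 2 + Suc m) mod 2" using assms(1) by (simp only:)
  also have "\<dots> = ((y + m) + 2) mod 2" by (simp only: mod_add_left_eq) simp
  also have "\<dots> = (y + m) mod 2" by simp
  finally show ?thesis using assms(2) by simp
qed
lemma par_aux2: assumes "(Suc (y::nat)) mod 2 = z mod 2" "(y + x) mod 2 = (c+1) mod 2" shows "(z + x) mod 2 = c mod 2"
proof -
  have "(z + x) mod 2 = (z mod 2 + x) mod 2" by (simp only: mod_add_left_eq)
  also have "\<dots> = (Suc y mod 2 + x) mod 2" using assms(1) by (simp only:)
  also have "\<dots> = (Suc y + x) mod 2" by (simp only: mod_add_left_eq)
  also have "\<dots> = Suc (y + x) mod 2" by simp
  also have "\<dots> = Suc ((y + x) mod 2) mod 2" by (simp only: mod_Suc_eq)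
  also have "\<dots> = Suc ((c + 1) mod 2) mod 2" using assms(2) by (simp only:)
  also have "\<dots> = (c + 2) mod 2" by (simp only: mod_Suc_eq) simp
  finally show ?thesis by simp
qed

context thinloc begin

lemma b_cons_par:
  assumes "1 \<le> m" "m < e"
  shows "b (Suc m) mod 2 = (b m + 1) mod 2"
proof -
  define bb where "bb = b m"
  define bb' where "bb' = b (Suc m)"
  have bbB: "bb \<in> B" "bb' \<in> B" using b_in assms unfolding bb_def bb'_def by auto
  have lt: "bb < bb'" unfolding bb_def bb'_def using b_mono assms by auto
  obtain s where s: "1 < s" "s + 1 \<le> bb'" "d (s - 1) = 0" "\<forall>j\<in>{s..bb'}. d j = 1" "(s - 1) mod 2 = bb' mod 2"
    using B_start[OF bbB(2)] by blast
  have g: "bb + 3 \<le> bb'" using B_gap bbB lt by auto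
  have pb: "d (Suc bb) = 0" "bb + 2 \<le> t" "bb' + 2 \<le> t" using B_props bbB by auto
  have sge: "bb + 2 \<le> s"
  proof (rule ccontr)
    assume "\<not> bb + 2 \<le> s"
    then have "Suc bb \<in> {s..bb'}" using g by auto
    then show False using s(4) pb by auto
  qed
  have "Suc bb mod 2 = (s - 1) mod 2"
  proof (rule Z)
    show "s - 1 \<in> {1..t}" using s pb by auto
    show "d (s - 1) = 0" by (rule s(3))
    show "Suc bb \<in> {1..t}" using pb by auto
    show "d (Suc bb) = 0" by (rule pb(1))
    show "Suc bb \<le> s - 1" using sge by auto
    show "\<forall>x\<in>B. \<not> (Suc bb \<le> x \<and> x < s - 1)"
    proof (intro ballI notI)
      fix x assume xB: "x \<in> B" and x: "Suc bb \<le> x \<and> x < s - 1"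
      obtain m'' where m'': "1 \<le> m''" "m'' \<le> e" "b m'' = x" using B_b[OF xB] by blast
      have "b m < b m''" "b m'' < b (Suc m)" using x m'' s(2) unfolding bb_def bb'_def by auto
      then have "m < m''" "m'' < Suc m" using b_mono_iff m'' assms by auto
      then show False by simp
    qed
  qed
  then show ?thesis using s(5) unfolding bb_def bb'_def by simp
qed

lemma b_par: "1 \<le> m \<Longrightarrow> m \<le> e \<Longrightarrow> (b m + m) mod 2 = (b 1 + 1) mod 2"
proof (induction m)
  case 0 then show ?case by simp
next
  case (Suc m)
  show ?case
  proof (cases "m = 0")
    case True then show ?thesis by simp
  next
    case False
    then have "(b m + m) mod 2 = (b 1 + 1) mod 2" using Suc by auto
    moreover have "b (Suc m) mod 2 = (b m + 1) mod 2" using b_cons_par[of m] False Suc by auto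
    ultimately show ?thesis using par_aux by blast
  qed
qed

definition reg :: "nat \<Rightarrow> nat \<Rightarrow> bool" where
  "reg j x \<longleftrightarrow> x \<le> e \<and> (x = 0 \<or> b x < j) \<and> (x = e \<or> j \<le> b (Suc x))"

lemma reg_ex: "\<exists>x. reg j x"
proof -
  define P where "P = {x\<in>{0..e}. x = 0 \<or> b x < j}"
  have finP: "finite P" unfolding P_def by auto
  have "0 \<in> P" unfolding P_def by auto
  define x where "x = Max P"
  have xP: "x \<in> P" unfolding x_def using finP \<open>0 \<in> P\<close> Max_in by blast
  have xmax: "\<And>y. y \<in> P \<Longrightarrow> y \<le> x" unfolding x_def using finP by simp
  have "x = e \<or> j \<le> b (Suc x)"
  proof (rule ccontr)
    assume "\<not> (x = e \<or> j \<le> b (Suc x))"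
    then have "Suc x \<in> P" using xP unfolding P_def by auto
    then show False using xmax by fastforce
  qed
  then show ?thesis using xP unfolding reg_def P_def by auto
qed

lemma reg_uniq_aux: "reg j x \<Longrightarrow> reg j y \<Longrightarrow> x < y \<Longrightarrow> False"
proof -
  assume r: "reg j x" "reg j y" "x < y"
  then have "b y < j" "j \<le> b (Suc x)" "y \<le> e" unfolding reg_def by auto
  moreover have "b (Suc x) \<le> b y"
    using b_mono[of "Suc x" y] r(3) \<open>y \<le> e\<close> by (cases "Suc x = y") auto
  ultimately show False by simp
qed

lemma reg_uniq: "reg j x \<Longrightarrow> reg j y \<Longrightarrow> x = y"
  using reg_uniq_aux nat_neq_iff by metis

lemma zero_par:
  assumes z: "z \<in> {1..t}" "d z = 0" and r: "reg z x"
  shows "(z + x) mod 2 = b 1 mod 2"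
proof (cases "x = 0")
  case True
  have b1B: "b 1 \<in> B" using b_in e2 by auto
  have zle: "z \<le> b 1" using r True e2 unfolding reg_def by auto
  obtain s where s: "1 < s" "s + 1 \<le> b 1" "d (s - 1) = 0" "\<forall>j\<in>{s..b 1}. d j = 1" "(s - 1) mod 2 = b 1 mod 2"
    using B_start[OF b1B] by blast
  have zs: "z \<le> s - 1"
  proof (rule ccontr)
    assume "\<not> z \<le> s - 1"
    then have "z \<in> {s..b 1}" using zle by auto
    then show False using s(4) z by auto
  qed
  have "z mod 2 = (s - 1) mod 2"
  proof (rule Z)
    show "s - 1 \<in> {1..t}" using s B_props(2)[OF b1B] by auto
    show "\<forall>x\<in>B. \<not> (z \<le> x \<and> x < s - 1)"
    proof (intro ballI notI)
      fix y assume yB: "y \<in> B" and y: "z \<le> y \<and> y < s - 1"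
      obtain m where m: "1 \<le> m" "m \<le> e" "b m = y" using B_b[OF yB] by blast
      have "b 1 \<le> b m" using b_mono[of 1 m] m by (cases "m = 1") auto
      then show False using y m s(2) by auto
    qed
  qed (use s z zs in auto)
  then show ?thesis using True s(5) by simp
next
  case False
  have xB: "b x \<in> B" using b_in False r unfolding reg_def by auto
  have bz: "b x < z" using r False unfolding reg_def by auto
  have pb: "d (Suc (b x)) = 0" "b x + 2 \<le> t" using B_props xB by auto
  have "Suc (b x) mod 2 = z mod 2"
  proof (rule Z)
    show "\<forall>y\<in>B. \<not> (Suc (b x) \<le> y \<and> y < z)"
    proof (intro ballI notI)
      fix y assume yB: "y \<in> B" and y: "Suc (b x) \<le> y \<and> y < z"
      obtain m where m: "1 \<le> m" "m \<le> e" "b m = y" using B_b[OF yB] by blast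
      have "x < m" using b_mono_iff[of x m] m y False r unfolding reg_def by auto
      moreover have "m < Suc x"
      proof (cases "x = e")
        case True then show ?thesis using m by simp
      next
        case False
        then have "b m < b (Suc x)" using r y m unfolding reg_def by auto
        then show ?thesis using b_mono_iff[of m "Suc x"] m False r unfolding reg_def by auto
      qed
      ultimately show False by simp
    qed
  qed (use z bz pb in auto)
  moreover have "(b x + x) mod 2 = (b 1 + 1) mod 2" using b_par[of x] False r unfolding reg_def by auto
  ultimately show ?thesis by (rule par_aux2)
qed

end

lemma mod2_iff: "(a::nat) mod 2 = c mod 2 \<longleftrightarrow> (even a \<longleftrightarrow> even c)"
  by (metis even_iff_mod_2_eq_zero odd_iff_mod_2_eq_one)

lemma even_pred: "(n::nat) \<ge> 1 \<Longrightarrow> even (n - 1) \<longleftrightarrow> odd n"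
  by (metis Suc_diff_1 even_Suc less_eq_Suc_le One_nat_def)

context thinloc begin

lemma b_par': "1 \<le> m \<Longrightarrow> m \<le> e \<Longrightarrow> even (b m + m) \<longleftrightarrow> odd (b 1)"
  using b_par[of m] by (simp add: mod2_iff)

lemma zero_par': "z \<in> {1..t} \<Longrightarrow> d z = 0 \<Longrightarrow> reg z x \<Longrightarrow> even (z + x) \<longleftrightarrow> even (b 1)"
  using zero_par[of z x] by (simp add: mod2_iff)

lemma b1B: "b 1 \<in> B" by (rule b_in) (use e2 in simp_all)

lemma bprops:
  assumes "1 \<le> m" "m \<le> e"
  shows "3 \<le> b m" "b m + 2 \<le> t" "d (b m) = 1" "d (b m - 1) = 1" "d (Suc (b m)) = 0" "b m \<in> S"
    "b m + 1 \<notin> S"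
  using B_props[OF b_in[OF assms]] by auto

lemma bgap: "1 \<le> m \<Longrightarrow> m < m' \<Longrightarrow> m' \<le> e \<Longrightarrow> b m + 3 \<le> b m'"
proof -
  assume a: "1 \<le> m" "m < m'" "m' \<le> e"
  have "b m \<in> B" using b_in a by simp
  moreover have "b m' \<in> B" using b_in a by simp
  moreover have "b m < b m'" using b_mono a by simp
  ultimately show ?thesis by (rule B_gap)
qed

lemma bgap1: "2 \<le> m \<Longrightarrow> m \<le> e \<Longrightarrow> b (m - 1) + 3 \<le> b m"
  using bgap[of "m - 1" m] by simp

lemma JC:
  assumes r: "reg j x"
  shows "j \<in> J \<longleftrightarrow> j \<in> {1..t} \<and> (x = 0 \<or> b x + 2 \<le> j) \<and> (even (j + x) \<longleftrightarrow> odd (b 1))"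
proof -
  have b13: "3 \<le> b 1" using bprops[of 1] e2 by auto
  have Jdef: "j \<in> J \<longleftrightarrow> j \<in> {1..t} \<and>
      ((j \<le> b 1 - 1 \<and> j mod 2 = (b 1 - 1) mod 2)
    \<or> (\<exists>i. 1 \<le> i \<and> i < e \<and> b i + 2 \<le> j \<and> j \<le> b (Suc i) - 1 \<and> j mod 2 = b i mod 2)
    \<or> (j \<ge> b e + 2 \<and> j mod 2 = b e mod 2))"
    unfolding J_of_def by simp
  show ?thesis
  proof
    assume jJ: "j \<in> J"
    then have j1t: "j \<in> {1..t}" using Jdef by blast
    from jJ Jdef consider
      (R0) "j \<le> b 1 - 1" "j mod 2 = (b 1 - 1) mod 2"
      | (Ri) i where "1 \<le> i" "i < e" "b i + 2 \<le> j" "j \<le> b (Suc i) - 1" "j mod 2 = b i mod 2"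
      | (Re) "j \<ge> b e + 2" "j mod 2 = b e mod 2"
      by blast
    then show "j \<in> {1..t} \<and> (x = 0 \<or> b x + 2 \<le> j) \<and> (even (j + x) \<longleftrightarrow> odd (b 1))"
    proof cases
      case R0
      have "reg j 0" unfolding reg_def using R0 by auto
      then have "x = 0" using reg_uniq r by blast
      moreover have "even j \<longleftrightarrow> odd (b 1)" using R0(2) even_pred[of "b 1"] b13 by (simp add: mod2_iff)
      ultimately show ?thesis using j1t by simp
    next
      case (Ri i)
      have "reg j i" unfolding reg_def using Ri by auto
      then have "x = i" using reg_uniq r by blast
      moreover have "even (b i + i) \<longleftrightarrow> odd (b 1)" using b_par' Ri by auto
      ultimately show ?thesis using j1t Ri by (simp add: mod2_iff)
    next
      case Re
      have "reg j e" unfolding reg_def using Re by auto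
      then have "x = e" using reg_uniq r by blast
      moreover have "even (b e + e) \<longleftrightarrow> odd (b 1)" using b_par' e2 by auto
      ultimately show ?thesis using j1t Re by (simp add: mod2_iff)
    qed
  next
    assume h: "j \<in> {1..t} \<and> (x = 0 \<or> b x + 2 \<le> j) \<and> (even (j + x) \<longleftrightarrow> odd (b 1))"
    have xe: "x \<le> e" using r unfolding reg_def by simp
    consider (z) "x = 0" | (m) "0 < x" "x < e" | (l) "x = e" using xe by linarith
    then show "j \<in> J"
    proof cases
      case z
      then have "j \<le> b 1" using r e2 unfolding reg_def by auto
      moreover have "j \<noteq> b 1" using h z by auto
      ultimately have "j \<le> b 1 - 1" by simp
      moreover have "j mod 2 = (b 1 - 1) mod 2" using h z even_pred[of "b 1"] b13 by (simp add: mod2_iff)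
      ultimately show ?thesis using Jdef h by blast
    next
      case m
      have le: "j \<le> b (Suc x)" using r m unfolding reg_def by auto
      have "even (b (Suc x) + Suc x) \<longleftrightarrow> odd (b 1)" using b_par'[of "Suc x"] m by auto
      then have "j \<noteq> b (Suc x)" using h by auto
      then have "j \<le> b (Suc x) - 1" using le by simp
      moreover have "j mod 2 = b x mod 2"
      proof -
        have "even (b x + x) \<longleftrightarrow> odd (b 1)" using b_par'[of x] m by simp
        then have "even j \<longleftrightarrow> even (b x)" using h by auto
        then show ?thesis by (simp add: mod2_iff)
      qed
      moreover have "b x + 2 \<le> j" using h m by simp
      ultimately have "\<exists>i. 1 \<le> i \<and> i < e \<and> b i + 2 \<le> j \<and> j \<le> b (Suc i) - 1 \<and> j mod 2 = b i mod 2"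
        using m by (intro exI[of _ x]) auto
      then show ?thesis using Jdef h by blast
    next
      case l
      have "j mod 2 = b e mod 2"
      proof -
        have "even (b e + e) \<longleftrightarrow> odd (b 1)" using b_par'[of e] e2 by simp
        then have "even j \<longleftrightarrow> even (b e)" using h l by auto
        then show ?thesis by (simp add: mod2_iff)
      qed
      moreover have "b e + 2 \<le> j" using h l e2 by simp
      ultimately show ?thesis using Jdef h by blast
    qed
  qed
qed

lemma J_sub_S: "j \<in> J \<Longrightarrow> j \<in> S"
proof -
  assume jJ: "j \<in> J"
  obtain x where r: "reg j x" using reg_ex by blast
  have h: "j \<in> {1..t}" "even (j + x) \<longleftrightarrow> odd (b 1)" using JC[OF r] jJ by auto
  show "j \<in> S"
  proof (rule ccontr)
    assume "j \<notin> S"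
    then have "d j = 0" using d01[of j] h unfolding supp_def by auto
    then have "even (j + x) \<longleftrightarrow> even (b 1)" using zero_par' h r by auto
    then show False using h by simp
  qed
qed

lemma finJ: "finite J"
proof -
  have "J \<subseteq> S" using J_sub_S by (simp add: subset_iff)
  then show ?thesis using finS by (rule finite_subset)
qed

lemma reg_bm: assumes "1 \<le> m" "m \<le> e" shows "reg (b m) (m - 1)"
proof -
  have "m - 1 = 0 \<or> b (m - 1) < b m"
  proof (cases "m = 1")
    case False then have "1 \<le> m - 1" "m - 1 < m" using assms by auto
    then show ?thesis using b_mono[of "m - 1" m] assms(2) by simp
  qed simp
  moreover have "Suc (m - 1) = m" using assms by simp
  ultimately show ?thesis unfolding reg_def using assms by simp
qed

lemma reg_bm1: assumes "1 \<le> m" "m \<le> e" shows "reg (b m - 1) (m - 1)"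
proof -
  have "m - 1 = 0 \<or> b (m - 1) < b m - 1"
  proof (cases "m = 1")
    case False then have "2 \<le> m" using assms by auto
    then show ?thesis using bgap1[of m] assms(2) by simp
  qed simp
  moreover have "Suc (m - 1) = m" using assms by simp
  ultimately show ?thesis unfolding reg_def using assms by simp
qed

lemma reg_bm2: assumes "1 \<le> m" "m \<le> e" shows "reg (b m + 2) m"
proof -
  have "m = e \<or> b m + 2 \<le> b (Suc m)"
  proof (cases "m = e")
    case False then have "Suc m \<le> e" using assms by auto
    then show ?thesis using bgap[of m "Suc m"] assms(1) by simp
  qed simp
  then show ?thesis unfolding reg_def using assms by simp
qed

lemma bm_notJ: assumes "1 \<le> m" "m \<le> e" shows "b m \<notin> J"
proof
  assume "b m \<in> J"
  then have "even (b m + (m - 1)) \<longleftrightarrow> odd (b 1)" using JC[OF reg_bm[OF assms]] by auto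
  moreover have "even (b m + m) \<longleftrightarrow> odd (b 1)" using b_par' assms by auto
  moreover have eq: "b m + m = (b m + (m - 1)) + 1" using assms by simp
  have "even (b m + m) \<longleftrightarrow> \<not> even (b m + (m - 1))" unfolding eq by simp
  ultimately show False by blast
qed

lemma bm1_J: assumes "1 \<le> m" "m \<le> e" shows "b m - 1 \<in> J"
proof -
  have p: "even (b m + m) \<longleftrightarrow> odd (b 1)" using b_par' assms by auto
  have g: "m - 1 = 0 \<or> b (m - 1) + 2 \<le> b m - 1" using bgap1[of m] assms by (cases "m = 1") auto
  have eq: "b m + m = (b m - 1 + (m - 1)) + 2" using assms bprops(1)[OF assms] by simp
  have "even (b m + m) \<longleftrightarrow> even (b m - 1 + (m - 1))" unfolding eq by simp
  then have "even (b m - 1 + (m - 1)) \<longleftrightarrow> odd (b 1)" using p by blast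
  then show ?thesis using JC[OF reg_bm1[OF assms]] g bprops[OF assms] by auto
qed

lemma bm2_J: assumes "1 \<le> m" "m \<le> e" shows "b m + 2 \<in> J"
proof -
  have p: "even (b m + m) \<longleftrightarrow> odd (b 1)" using b_par' assms by auto
  have eq: "b m + 2 + m = (b m + m) + 2" by simp
  have "even (b m + 2 + m) \<longleftrightarrow> even (b m + m)" unfolding eq by simp
  then have "even (b m + 2 + m) \<longleftrightarrow> odd (b 1)" using p by blast
  then show ?thesis using JC[OF reg_bm2[OF assms]] bprops[OF assms] by auto
qed

lemma J_std: assumes "j \<in> J" shows "Suc j \<notin> J"
proof
  assume sJ: "Suc j \<in> J"
  obtain x where r: "reg j x" using reg_ex by blast
  have "x = e \<or> Suc j \<le> b (Suc x)"
  proof (rule ccontr)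
    assume "\<not> (x = e \<or> Suc j \<le> b (Suc x))"
    then have "j = b (Suc x)" "x < e" using r unfolding reg_def by auto
    then show False using bm_notJ[of "Suc x"] assms by auto
  qed
  then have r2: "reg (Suc j) x" using r unfolding reg_def by auto
  have "even (j + x) \<longleftrightarrow> odd (b 1)" using JC[OF r] assms by auto
  moreover have "even (Suc j + x) \<longleftrightarrow> odd (b 1)" using JC[OF r2] sJ by auto
  ultimately show False by simp
qed

lemma K_std: assumes "j \<in> S - J" "Suc j \<in> S - J" shows False
proof -
  obtain x where r: "reg j x" using reg_ex by blast
  have "x = e \<or> Suc j \<le> b (Suc x)"
  proof (rule ccontr)
    assume "\<not> (x = e \<or> Suc j \<le> b (Suc x))"
    then have "j = b (Suc x)" "x < e" using r unfolding reg_def by auto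
    then show False using bprops(7)[of "Suc x"] assms by auto
  qed
  then have r2: "reg (Suc j) x" using r unfolding reg_def by auto
  have low: "x = 0 \<or> b x + 2 \<le> j"
  proof (cases "x = 0")
    case False
    then have "b x < j" using r unfolding reg_def by auto
    moreover have "j \<noteq> b x + 1" using bprops(7)[of x] False r assms unfolding reg_def by auto
    ultimately show ?thesis by simp
  qed simp
  have jt: "j \<in> {1..t}" "Suc j \<in> {1..t}" using assms S_sub by auto
  have "\<not> (even (j + x) \<longleftrightarrow> odd (b 1))" using JC[OF r] assms jt low by auto
  moreover have "\<not> (even (Suc j + x) \<longleftrightarrow> odd (b 1))" using JC[OF r2] assms jt low by auto
  ultimately show False by simp
qed

end

lemma mult_entry:
  assumes "A \<in> carrier_mat nr n" "B \<in> carrier_mat n nc" "i < nr" "j < nc"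
  shows "(A * B) $$ (i,j) = (\<Sum>k<n. A $$ (i,k) * B $$ (k,j))"
  using assms by (auto simp: scalar_prod_def lessThan_atLeast0 intro!: sum.cong)

lemma mv_entry:
  assumes "A \<in> carrier_mat nr n" "v \<in> carrier_vec n" "i < nr"
  shows "(A *\<^sub>v v) $ i = (\<Sum>k<n. A $$ (i,k) * v $ k)"
  using assms by (auto simp: scalar_prod_def lessThan_atLeast0 intro!: sum.cong)

lemma sum_single:
  assumes "finite X" "\<And>x. x \<in> X \<Longrightarrow> x \<noteq> a \<Longrightarrow> f x = 0"
  shows "sum f X = (if a \<in> X then f a else 0)"
proof -
  have "sum f X = (\<Sum>x\<in>X. if x = a then f x else 0)" using assms(2) by (intro sum.cong) auto
  also have "\<dots> = (if a \<in> X then f a else 0)" using assms(1) by simp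
  finally show ?thesis .
qed

lemma consec_sub: "(a,p) \<in> consec X \<Longrightarrow> a \<in> X \<and> p \<in> X \<and> a < p"
  unfolding consec_def by auto

lemma consec_gap: "(a,p) \<in> consec X \<Longrightarrow> (\<And>j. j \<in> X \<Longrightarrow> Suc j \<notin> X) \<Longrightarrow> a + 2 \<le> p"
proof -
  assume c: "(a,p) \<in> consec X" and s: "\<And>j. j \<in> X \<Longrightarrow> Suc j \<notin> X"
  then have "a \<in> X" "p \<in> X" "a < p" using consec_sub by auto
  moreover have "p \<noteq> Suc a" using s \<open>a \<in> X\<close> \<open>p \<in> X\<close> by auto
  ultimately show ?thesis by linarith
qed

locale Floc = thinloc t d for t d +
  fixes tt :: "nat \<Rightarrow> 'a::field"
  assumes ttnz: "\<forall>m\<in>{2..e_of t d}. tt m \<noteq> 0"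
begin

abbreviation "K \<equiv> S - J"
abbreviation "n \<equiv> card S"
abbreviation "FF \<equiv> Fmat t d tt"
abbreviation "ix \<equiv> cnt S"

lemma idx_eq: "idx t d = ix" unfolding idx_def cnt_def by auto
lemma vdim_eq: "vdim t d = lecnt S" unfolding vdim_def lecnt_def by auto
lemma nvec_eq: "nvec t d = n" unfolding nvec_def by simp

lemma finK: "finite K" using finS by simp

lemma A_eq: "A_set t d = consec K \<union> (consec J - {(b m - 1, b m + 2) | m. 2 \<le> m \<and> m \<le> e})
     \<union> {(b m, b m + 2) | m. 1 \<le> m \<and> m \<le> e}"
  unfolding A_set_def Let_def by simp

lemma A_sub: "A_set t d \<subseteq> S \<times> S"
proof -
  have "consec K \<subseteq> S \<times> S" using consec_sub by fastforce
  moreover have "consec J \<subseteq> S \<times> S" using consec_sub J_sub_S by fastforce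
  moreover have "{(b m, b m + 2) | m. 1 \<le> m \<and> m \<le> e} \<subseteq> S \<times> S"
    using bprops(6) bm2_J J_sub_S by auto
  ultimately show ?thesis unfolding A_eq by blast
qed

lemma finA: "finite (A_set t d)"
  using A_sub finS finite_subset by (metis finite_SigmaI)

lemma ix_lt: "a \<in> S \<Longrightarrow> ix a < n" using cnt_lt_card[OF finS] .

lemma ix_inj: "a \<in> S \<Longrightarrow> a' \<in> S \<Longrightarrow> ix a = ix a' \<longleftrightarrow> a = a'"
  using cnt_inj[OF finS] unfolding inj_on_def by blast

definition tsum :: "nat \<Rightarrow> nat \<Rightarrow> 'a" where
  "tsum a p = (\<Sum>m\<in>{2..e}. if a = b m - 1 \<and> p = b m + 2 then tt m else 0)"

lemma FF_carrier: "FF \<in> carrier_mat n n"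
  unfolding Fmat_def nvec_eq by simp

lemma FF_entry:
  assumes "a \<in> S" "p \<in> S"
  shows "FF $$ (ix a, ix p) = (if (a,p) \<in> A_set t d then 1 else 0) + tsum a p"
proof -
  have lt: "ix a < n" "ix p < n" using ix_lt assms by auto
  have fm: "\<And>i j. fmat t d i j $$ (ix a, ix p) = (if ix a = ix i \<and> ix p = ix j then 1 else 0)"
    unfolding fmat_def nvec_eq idx_eq using lt by simp
  have s1: "(\<Sum>q\<in>A_set t d. fmat t d (fst q) (snd q) $$ (ix a, ix p)) = (if (a,p) \<in> A_set t d then 1 else 0)"
  proof -
    have "(\<Sum>q\<in>A_set t d. fmat t d (fst q) (snd q) $$ (ix a, ix p))
        = (\<Sum>q\<in>A_set t d. if q = (a,p) then 1 else 0)"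
    proof (intro sum.cong refl)
      fix q assume qA: "q \<in> A_set t d"
      then have "fst q \<in> S" "snd q \<in> S" using A_sub by auto
      then show "fmat t d (fst q) (snd q) $$ (ix a, ix p) = (if q = (a,p) then 1 else 0)"
        unfolding fm using ix_inj assms by (cases q) auto
    qed
    also have "\<dots> = (if (a,p) \<in> A_set t d then 1 else 0)" using finA by simp
    finally show ?thesis .
  qed
  have s2: "(\<Sum>m\<in>{2..e}. tt m * fmat t d (b m - 1) (b m + 2) $$ (ix a, ix p)) = tsum a p"
    unfolding tsum_def
  proof (intro sum.cong refl)
    fix m assume m: "m \<in> {2..e}"
    then have "b m - 1 \<in> S" "b m + 2 \<in> S" using bm1_J bm2_J J_sub_S by auto
    then show "tt m * fmat t d (b m - 1) (b m + 2) $$ (ix a, ix p) = (if a = b m - 1 \<and> p = b m + 2 then tt m else 0)"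
      unfolding fm using ix_inj assms by auto
  qed
  show ?thesis unfolding Fmat_def nvec_eq using lt s1 s2 by simp
qed

lemma tsum_zero: "\<not> (\<exists>m\<in>{2..e}. a = b m - 1 \<and> p = b m + 2) \<Longrightarrow> tsum a p = 0"
  unfolding tsum_def by (intro sum.neutral) auto

lemma tsum_one:
  assumes m0: "m0 \<in> {2..e}" "a = b m0 - 1" "p = b m0 + 2"
  shows "tsum a p = tt m0"
proof -
  have "tsum a p = (if m0 \<in> {2..e} then (if a = b m0 - 1 \<and> p = b m0 + 2 then tt m0 else 0) else 0)"
    unfolding tsum_def
  proof (rule sum_single[where f="\<lambda>m. if a = b m - 1 \<and> p = b m + 2 then tt m else 0"])
    fix m assume "m \<in> {2..e}" "m \<noteq> m0"
    then have "b m \<noteq> b m0" using b_inj[of m m0] m0 by auto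
    then show "(if a = b m - 1 \<and> p = b m + 2 then tt m else 0) = 0" using m0 by auto
  qed simp
  then show ?thesis using m0 by simp
qed

lemma bpair_consecJ: assumes "1 \<le> m" "m \<le> e" shows "(b m - 1, b m + 2) \<in> consec J"
proof -
  have "b m - 1 \<in> J" "b m + 2 \<in> J" using bm1_J bm2_J assms by auto
  moreover have "b m - 1 < b m + 2" by simp
  moreover have "\<not> (\<exists>k\<in>J. b m - 1 < k \<and> k < b m + 2)"
  proof
    assume "\<exists>k\<in>J. b m - 1 < k \<and> k < b m + 2"
    then obtain k where k: "k \<in> J" "b m - 1 < k" "k < b m + 2" by blast
    then have "k = b m \<or> k = b m + 1" using bprops(1)[OF assms] by auto
    then show False using k bm_notJ[OF assms] bprops(7)[OF assms] J_sub_S by auto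
  qed
  ultimately show ?thesis unfolding consec_def by auto
qed

lemma E1:
  assumes "a \<in> S" "p \<in> K"
  shows "FF $$ (ix a, ix p) = (if (a,p) \<in> consec K then 1 else 0)"
proof -
  have nb: "\<And>m. 1 \<le> m \<Longrightarrow> m \<le> e \<Longrightarrow> p \<noteq> b m + 2" using bm2_J assms by auto
  have "tsum a p = 0"
  proof (rule tsum_zero)
    show "\<not> (\<exists>m\<in>{2..e}. a = b m - 1 \<and> p = b m + 2)"
    proof
      assume "\<exists>m\<in>{2..e}. a = b m - 1 \<and> p = b m + 2"
      then obtain m where "m \<in> {2..e}" "p = b m + 2" by blast
      then show False using nb[of m] by auto
    qed
  qed
  moreover have "(a,p) \<in> A_set t d \<longleftrightarrow> (a,p) \<in> consec K"
    unfolding A_eq using nb consec_sub[of a p J] assms by auto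
  ultimately show ?thesis using FF_entry assms by simp
qed

lemma E2a:
  assumes "a \<in> J" "p \<in> J" "(a,p) \<notin> consec J"
  shows "FF $$ (ix a, ix p) = 0"
proof -
  have "tsum a p = 0"
  proof (rule tsum_zero)
    show "\<not> (\<exists>m\<in>{2..e}. a = b m - 1 \<and> p = b m + 2)"
    proof
      assume "\<exists>m\<in>{2..e}. a = b m - 1 \<and> p = b m + 2"
      then obtain m where m: "m \<in> {2..e}" "a = b m - 1" "p = b m + 2" by blast
      then have "(a,p) \<in> consec J" using bpair_consecJ[of m] by auto
      then show False using assms(3) by simp
    qed
  qed
  moreover have "(a,p) \<notin> A_set t d"
    unfolding A_eq using assms consec_sub[of a p K] bm_notJ by auto
  ultimately show ?thesis using FF_entry assms J_sub_S by simp
qed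

lemma E2b:
  assumes "(a,p) \<in> consec J"
  shows "FF $$ (ix a, ix p) \<noteq> 0"
proof -
  have ap: "a \<in> J" "p \<in> J" using consec_sub assms by auto
  show ?thesis
  proof (cases "\<exists>m\<in>{2..e}. a = b m - 1 \<and> p = b m + 2")
    case True
    then obtain m0 where m0: "m0 \<in> {2..e}" "a = b m0 - 1" "p = b m0 + 2" by blast
    have "tsum a p = tt m0" using tsum_one m0 by blast
    moreover have "(a,p) \<notin> A_set t d"
    proof
      assume "(a,p) \<in> A_set t d"
      then have "(a,p) \<in> consec J - {(b m - 1, b m + 2) | m. 2 \<le> m \<and> m \<le> e}"
        unfolding A_eq using ap consec_sub[of a p K] bm_notJ by auto
      then show False using m0 by auto
    qed
    ultimately show ?thesis using FF_entry ap J_sub_S ttnz m0(1) by simp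
  next
    case False
    then have "tsum a p = 0" by (rule tsum_zero)
    moreover have "(a,p) \<in> A_set t d" unfolding A_eq using assms False by auto
    ultimately show ?thesis using FF_entry ap J_sub_S by simp
  qed
qed

lemma E4:
  assumes "p \<in> S" "p \<le> b 1 + 2"
  shows "FF $$ (ix (b 1), ix p) = (if p = b 1 + 2 then 1 else 0)"
proof -
  have e1: "1 \<le> (1::nat)" "1 \<le> e" using e2 by auto
  have "tsum (b 1) p = 0"
  proof (rule tsum_zero)
    show "\<not> (\<exists>m\<in>{2..e}. b 1 = b m - 1 \<and> p = b m + 2)"
      using bm1_J bm_notJ[OF e1] by force
  qed
  moreover have "(b 1, p) \<in> A_set t d \<longleftrightarrow> p = b 1 + 2"
  proof
    assume h: "(b 1, p) \<in> A_set t d"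
    have nK: "(b 1, p) \<notin> consec K"
    proof
      assume c: "(b 1, p) \<in> consec K"
      then have "p \<in> K" "b 1 < p" using consec_sub by auto
      moreover have "b 1 + 1 \<notin> S" "b 1 + 2 \<in> J" using bprops(7)[OF e1] bm2_J[OF e1] by auto
      ultimately have "p \<noteq> b 1 + 1" "p \<noteq> b 1 + 2" using assms by auto
      then show False using assms \<open>b 1 < p\<close> by linarith
    qed
    have nJ: "(b 1, p) \<notin> consec J" using consec_sub bm_notJ[OF e1] by blast
    from h nK nJ obtain m where m: "1 \<le> m" "m \<le> e" "b 1 = b m" "p = b m + 2"
      unfolding A_eq by auto
    then show "p = b 1 + 2" by simp
  next
    assume "p = b 1 + 2"
    then show "(b 1, p) \<in> A_set t d" unfolding A_eq using e1 by auto
  qed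
  ultimately show ?thesis using FF_entry assms bprops(6)[OF e1] by simp
qed

lemma E5:
  assumes "a \<in> S" "p \<in> S" "FF $$ (ix a, ix p) \<noteq> 0"
  shows "a + 2 \<le> p"
proof (cases "\<exists>m\<in>{2..e}. a = b m - 1 \<and> p = b m + 2")
  case True then show ?thesis by auto
next
  case False
  then have "tsum a p = 0" by (rule tsum_zero)
  then have "(a,p) \<in> A_set t d" using FF_entry assms by (auto split: if_splits)
  then consider "(a,p) \<in> consec K" | "(a,p) \<in> consec J" | "\<exists>m. a = b m \<and> p = b m + 2"
    unfolding A_eq by auto
  then show ?thesis
  proof cases
    case 1 then show ?thesis by (rule consec_gap) (use K_std in blast)
  next
    case 2 then show ?thesis by (rule consec_gap) (use J_std in blast)
  qed auto
qed

end

lemma sum_single_lt: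
  assumes "\<And>k. k < (N::nat) \<Longrightarrow> k \<noteq> a \<Longrightarrow> f k = 0"
  shows "(\<Sum>k<N. f k) = (if a < N then f a else 0)"
proof -
  have "sum f {..<N} = (if a \<in> {..<N} then f a else 0)" by (rule sum_single[OF finite_lessThan]) (use assms in auto)
  then show ?thesis by simp
qed

lemma incl_carrier: "incl_mat m n \<in> carrier_mat m n" unfolding incl_mat_def by simp
lemma incl_dim[simp]: "dim_row (incl_mat m n) = m" "dim_col (incl_mat m n) = n" unfolding incl_mat_def by simp_all

lemma incl_right:
  assumes "A \<in> carrier_mat m n'" "n \<le> n'" "r < m" "c < n"
  shows "(A * incl_mat n' n) $$ (r,c) = A $$ (r,c)"
proof -
  have "(A * incl_mat n' n) $$ (r,c) = (\<Sum>k<n'. A $$ (r,k) * incl_mat n' n $$ (k,c))"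
    by (rule mult_entry[OF assms(1) incl_carrier assms(3,4)])
  also have "\<dots> = (if c < n' then A $$ (r,c) * incl_mat n' n $$ (c,c) else 0)"
    by (rule sum_single_lt) (use assms in \<open>auto simp: incl_mat_def\<close>)
  also have "\<dots> = A $$ (r,c)" using assms by (simp add: incl_mat_def)
  finally show ?thesis .
qed

lemma incl_left:
  assumes "B \<in> carrier_mat n nc" "r < m" "c < nc"
  shows "(incl_mat m n * B) $$ (r,c) = (if r < n then B $$ (r,c) else 0)"
proof -
  have "(incl_mat m n * B) $$ (r,c) = (\<Sum>k<n. incl_mat m n $$ (r,k) * B $$ (k,c))"
    by (rule mult_entry[OF incl_carrier assms])
  also have "\<dots> = (if r < n then incl_mat m n $$ (r,r) * B $$ (r,c) else 0)"
    by (rule sum_single_lt) (use assms in \<open>auto simp: incl_mat_def\<close>)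
  also have "\<dots> = (if r < n then B $$ (r,c) else 0)" using assms by (simp add: incl_mat_def)
  finally show ?thesis .
qed

definition shm :: "nat \<Rightarrow> nat \<Rightarrow> 'a::field mat" where
  "shm l l' = mat l l' (\<lambda>(r,c). if c = Suc r then 1 else 0)"

lemma shm_carrier: "shm l l' \<in> carrier_mat l l'" unfolding shm_def by simp
lemma shm_dim[simp]: "dim_row (shm l l') = l" "dim_col (shm l l') = l'" unfolding shm_def by simp_all

lemma shm_right:
  assumes "A \<in> carrier_mat m l" "r < m" "c < l'"
  shows "(A * shm l l') $$ (r,c) = (if 1 \<le> c \<and> c - 1 < l then A $$ (r, c - 1) else 0)"
proof -
  have "(A * shm l l') $$ (r,c) = (\<Sum>k<l. A $$ (r,k) * shm l l' $$ (k,c))"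
    by (rule mult_entry[OF assms(1) shm_carrier assms(2,3)])
  also have "\<dots> = (if c - 1 < l then A $$ (r,c - 1) * shm l l' $$ (c - 1,c) else 0)"
    by (rule sum_single_lt) (use assms in \<open>auto simp: shm_def\<close>)
  also have "\<dots> = (if 1 \<le> c \<and> c - 1 < l then A $$ (r, c - 1) else 0)"
    using assms by (auto simp: shm_def)
  finally show ?thesis .
qed

lemma shm_left:
  assumes "B \<in> carrier_mat l' nc" "r < l" "c < nc"
  shows "(shm l l' * B) $$ (r,c) = (if Suc r < l' then B $$ (Suc r, c) else 0)"
proof -
  have "(shm l l' * B) $$ (r,c) = (\<Sum>k<l'. shm l l' $$ (r,k) * B $$ (k,c))"
    by (rule mult_entry[OF shm_carrier assms])
  also have "\<dots> = (if Suc r < l' then shm l l' $$ (r,Suc r) * B $$ (Suc r,c) else 0)"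
    by (rule sum_single_lt) (use assms in \<open>auto simp: shm_def\<close>)
  also have "\<dots> = (if Suc r < l' then B $$ (Suc r, c) else 0)"
    using assms by (auto simp: shm_def)
  finally show ?thesis .
qed

lemma Delta_simps:
  "rdim (Delta X) = lecnt X"
  "ralpha (Delta X) i = incl_mat (lecnt X (Suc i)) (lecnt X i)"
  "rbeta (Delta X) j = shm (lecnt X j) (lecnt X (j + 2))"
  unfolding Delta_def Let_def lecnt_def shm_def by auto

lemma lecnt_mono: "finite X \<Longrightarrow> i \<le> i' \<Longrightarrow> lecnt X i \<le> lecnt X i'"
  unfolding lecnt_def by (intro card_mono) auto

context Floc begin

abbreviation "V \<equiv> lecnt S"

lemma Mx_simps:
  "rdim (Mx t d x) = V"
  "ralpha (Mx t d x) i = incl_mat (V (Suc i)) (V i)"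
  "rbeta (Mx t d x) j = mat (V j) (V (j + 2)) (\<lambda>(r,c). x $$ (r,c))"
  unfolding Mx_def Let_def vdim_eq by auto

definition nK where "nK = nthX K"
definition nJ where "nJ = nthX J"

lemma ixV: "a \<in> S \<Longrightarrow> ix a < V i \<longleftrightarrow> a \<le> i"
  using cnt_lt_lecnt[OF finS] by blast

lemma V_le: "V i \<le> n" using lecnt_le_card[OF finS] .

lemma ix_surj: assumes "r < V i" shows "\<exists>a\<in>S. ix a = r \<and> a \<le> i"
proof -
  have "r < n" using assms V_le less_le_trans by blast
  then have "r \<in> ix ` S" using cnt_image[OF finS] by auto
  then obtain a where "a \<in> S" "ix a = r" by blast
  then show ?thesis using assms ixV by blast
qed

lemma nK_props: assumes "c < lecnt K i"
  shows "nK c \<in> K" "cnt K (nK c) = c" "nK c \<le> i" "ix (nK c) < V i" "nK c \<in> S"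
proof -
  have c: "c < card K" using assms lecnt_le_card[OF finK] less_le_trans by blast
  show k: "nK c \<in> K" "cnt K (nK c) = c" using nthX_props[OF finK c] unfolding nK_def by auto
  show "nK c \<le> i" using cnt_lt_lecnt[OF finK k(1)] k(2) assms by simp
  then show "ix (nK c) < V i" using ixV k by auto
  show "nK c \<in> S" using k by auto
qed

lemma nJ_props: assumes "r < lecnt J i"
  shows "nJ r \<in> J" "cnt J (nJ r) = r" "nJ r \<le> i" "ix (nJ r) < V i" "nJ r \<in> S"
proof -
  have c: "r < card J" using assms lecnt_le_card[OF finJ] less_le_trans by blast
  show k: "nJ r \<in> J" "cnt J (nJ r) = r" using nthX_props[OF finJ c] unfolding nJ_def by auto
  show "nJ r \<le> i" using cnt_lt_lecnt[OF finJ k(1)] k(2) assms by simp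
  then show "ix (nJ r) < V i" using ixV k J_sub_S by auto
  show "nJ r \<in> S" using k J_sub_S by auto
qed

definition fS :: "nat \<Rightarrow> 'a mat" where
  "fS i = mat (V i) (lecnt K i) (\<lambda>(r,c). if r = ix (nK c) then 1 else 0)"

lemma fS_carrier: "fS i \<in> carrier_mat (V i) (lecnt K i)" unfolding fS_def by simp
lemma fS_dim[simp]: "dim_row (fS i) = V i" "dim_col (fS i) = lecnt K i" unfolding fS_def by simp_all

lemma fS_alpha: "fS (Suc i) * incl_mat (lecnt K (Suc i)) (lecnt K i) = incl_mat (V (Suc i)) (V i) * fS i"
proof (rule eq_matI)
  fix r c assume rc: "r < dim_row (incl_mat (V (Suc i)) (V i) * fS i)" "c < dim_col (incl_mat (V (Suc i)) (V i) * fS i)"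
  then have r: "r < V (Suc i)" and c: "c < lecnt K i" by auto
  have mono: "lecnt K i \<le> lecnt K (Suc i)" by (rule lecnt_mono[OF finK]) simp
  have "(fS (Suc i) * incl_mat (lecnt K (Suc i)) (lecnt K i)) $$ (r,c) = fS (Suc i) $$ (r,c)"
    by (rule incl_right[OF fS_carrier mono r c])
  also have "\<dots> = (if r = ix (nK c) then 1 else 0)" unfolding fS_def using r c mono by simp
  also have "\<dots> = (if r < V i then fS i $$ (r,c) else 0)"
    unfolding fS_def using c nK_props(4)[OF c] by auto
  also have "\<dots> = (incl_mat (V (Suc i)) (V i) * fS i) $$ (r,c)"
    by (rule incl_left[OF fS_carrier r c, symmetric])
  finally show "(fS (Suc i) * incl_mat (lecnt K (Suc i)) (lecnt K i)) $$ (r,c) = (incl_mat (V (Suc i)) (V i) * fS i) $$ (r,c)" .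
qed (use fS_carrier incl_carrier in auto)

definition Mb :: "nat \<Rightarrow> 'a mat" where
  "Mb j = mat (V j) (V (j + 2)) (\<lambda>(r,c). FF $$ (r,c))"

lemma Mb_carrier: "Mb j \<in> carrier_mat (V j) (V (j+2))" unfolding Mb_def by simp
lemma Mb_dim[simp]: "dim_row (Mb j) = V j" "dim_col (Mb j) = V (j+2)" unfolding Mb_def by simp_all

lemma fS_beta: "fS j * shm (lecnt K j) (lecnt K (j + 2)) = Mb j * fS (j + 2)"
proof (rule eq_matI)
  fix r c assume rc: "r < dim_row (Mb j * fS (j + 2))" "c < dim_col (Mb j * fS (j + 2))"
  then have r: "r < V j" and c: "c < lecnt K (j + 2)" by auto
  obtain a where a: "a \<in> S" "ix a = r" "a \<le> j" using ix_surj[OF r] by blast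
  define p where "p = nK c"
  have p: "p \<in> K" "cnt K p = c" "ix p < V (j + 2)" using nK_props[OF c] unfolding p_def by auto
  have "(Mb j * fS (j + 2)) $$ (r,c) = (\<Sum>k<V (j+2). Mb j $$ (r,k) * fS (j + 2) $$ (k,c))"
    by (rule mult_entry[OF Mb_carrier fS_carrier r c])
  also have "\<dots> = (if ix p < V (j+2) then Mb j $$ (r,ix p) * fS (j + 2) $$ (ix p,c) else 0)"
    by (rule sum_single_lt) (use c in \<open>auto simp: fS_def p_def\<close>)
  also have "\<dots> = FF $$ (ix a, ix p)" using p r c a unfolding Mb_def fS_def p_def by simp
  also have "\<dots> = (if (a,p) \<in> consec K then 1 else 0)" by (rule E1) (use a p in auto)
  also have "\<dots> = (if 1 \<le> c \<and> c - 1 < lecnt K j then fS j $$ (r, c - 1) else 0)"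
  proof (cases "(a,p) \<in> consec K")
    case True
    then have aK: "a \<in> K" "c = Suc (cnt K a)" using consec_iff[OF finK] p by auto
    have lt: "cnt K a < lecnt K j" using cnt_lt_lecnt[OF finK aK(1)] a by simp
    have "nK (cnt K a) = a" unfolding nK_def using nthX_cnt[OF finK aK(1)] .
    then show ?thesis using True aK lt r a unfolding fS_def by simp
  next
    case False
    have "\<not> (1 \<le> c \<and> c - 1 < lecnt K j \<and> r = ix (nK (c - 1)))"
    proof
      assume h: "1 \<le> c \<and> c - 1 < lecnt K j \<and> r = ix (nK (c - 1))"
      then have "a = nK (c - 1)" using a ix_inj nK_props(5) by metis
      then have "a \<in> K" "cnt K a = c - 1" using nK_props h by auto
      then have "(a,p) \<in> consec K" using consec_iff[OF finK] p h by auto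
      then show False using False by simp
    qed
    then show ?thesis using False r unfolding fS_def by auto
  qed
  also have "\<dots> = (fS j * shm (lecnt K j) (lecnt K (j + 2))) $$ (r,c)"
    by (rule shm_right[OF fS_carrier r c, symmetric])
  finally show "(fS j * shm (lecnt K j) (lecnt K (j + 2))) $$ (r,c) = (Mb j * fS (j + 2)) $$ (r,c)" by simp
qed (use fS_carrier Mb_carrier shm_carrier in auto)

end

context Floc begin

definition cc :: "nat \<Rightarrow> 'a" where
  "cc r = (\<Prod>q<r. FF $$ (ix (nJ q), ix (nJ (Suc q))))"

lemma cc_Suc: "cc (Suc r) = cc r * FF $$ (ix (nJ r), ix (nJ (Suc r)))"
  unfolding cc_def by simp

lemma cc_nz: "r < card J \<Longrightarrow> cc r \<noteq> 0"
  unfolding cc_def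
proof (subst prod_zero_iff, simp, rule notI)
  assume r: "r < card J" and "\<exists>q\<in>{..<r}. FF $$ (ix (nJ q), ix (nJ (Suc q))) = 0"
  then obtain q where q: "q < r" "FF $$ (ix (nJ q), ix (nJ (Suc q))) = 0" by auto
  have q1: "q < card J" "Suc q < card J" using q r by auto
  have "(nJ q, nJ (Suc q)) \<in> consec J"
    using nthX_props[OF finJ q1(1)] nthX_props[OF finJ q1(2)] consec_iff[OF finJ] unfolding nJ_def by simp
  then show False using E2b q by blast
qed

definition gT :: "nat \<Rightarrow> 'a mat" where
  "gT i = mat (lecnt J i) (V i) (\<lambda>(r,c). if c = ix (nJ r) then cc r else 0)"

lemma gT_carrier: "gT i \<in> carrier_mat (lecnt J i) (V i)" unfolding gT_def by simp
lemma gT_dim[simp]: "dim_row (gT i) = lecnt J i" "dim_col (gT i) = V i" unfolding gT_def by simp_all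

lemma gT_alpha: "gT (Suc i) * incl_mat (V (Suc i)) (V i) = incl_mat (lecnt J (Suc i)) (lecnt J i) * gT i"
proof (rule eq_matI)
  fix r c assume rc: "r < dim_row (incl_mat (lecnt J (Suc i)) (lecnt J i) * gT i)" "c < dim_col (incl_mat (lecnt J (Suc i)) (lecnt J i) * gT i)"
  then have r: "r < lecnt J (Suc i)" and c: "c < V i" by auto
  have mono: "V i \<le> V (Suc i)" by (rule lecnt_mono[OF finS]) simp
  have "(gT (Suc i) * incl_mat (V (Suc i)) (V i)) $$ (r,c) = gT (Suc i) $$ (r,c)"
    by (rule incl_right[OF gT_carrier mono r c])
  also have "\<dots> = (if c = ix (nJ r) then cc r else 0)" unfolding gT_def using r c mono by simp
  also have "\<dots> = (if r < lecnt J i then gT i $$ (r,c) else 0)"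
  proof (cases "r < lecnt J i")
    case True then show ?thesis unfolding gT_def using c by simp
  next
    case False
    have "c \<noteq> ix (nJ r)"
    proof
      assume h: "c = ix (nJ r)"
      have "nJ r \<le> i" using ixV[of "nJ r" i] nJ_props[OF r] h c by simp
      then have "cnt J (nJ r) < lecnt J i" using cnt_lt_lecnt[OF finJ] nJ_props[OF r] by blast
      then show False using False nJ_props[OF r] by simp
    qed
    then show ?thesis using False by simp
  qed
  also have "\<dots> = (incl_mat (lecnt J (Suc i)) (lecnt J i) * gT i) $$ (r,c)"
    by (rule incl_left[OF gT_carrier r c, symmetric])
  finally show "(gT (Suc i) * incl_mat (V (Suc i)) (V i)) $$ (r,c) = (incl_mat (lecnt J (Suc i)) (lecnt J i) * gT i) $$ (r,c)" .
qed auto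

lemma gT_beta: "gT j * Mb j = shm (lecnt J j) (lecnt J (j + 2)) * gT (j + 2)"
proof (rule eq_matI)
  fix r c assume rc: "r < dim_row (shm (lecnt J j) (lecnt J (j + 2)) * gT (j + 2))" "c < dim_col (shm (lecnt J j) (lecnt J (j + 2)) * gT (j + 2))"
  then have r: "r < lecnt J j" and c: "c < V (j + 2)" by auto
  obtain p where p: "p \<in> S" "ix p = c" "p \<le> j + 2" using ix_surj[OF c] by blast
  define a where "a = nJ r"
  have a: "a \<in> J" "cnt J a = r" "ix a < V j" "a \<in> S" using nJ_props[OF r] unfolding a_def by auto
  have "(gT j * Mb j) $$ (r,c) = (\<Sum>k<V j. gT j $$ (r,k) * Mb j $$ (k,c))"
    by (rule mult_entry[OF gT_carrier Mb_carrier r c])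
  also have "\<dots> = (if ix a < V j then gT j $$ (r, ix a) * Mb j $$ (ix a, c) else 0)"
    by (rule sum_single_lt) (use r in \<open>auto simp: gT_def a_def\<close>)
  also have "\<dots> = cc r * FF $$ (ix a, ix p)" using a r c p unfolding gT_def Mb_def a_def by simp
  also have "\<dots> = (if Suc r < lecnt J (j + 2) then gT (j + 2) $$ (Suc r, c) else 0)"
  proof (cases "p \<in> J \<and> cnt J p = Suc r")
    case True
    then have cons: "(a,p) \<in> consec J" using consec_iff[OF finJ] a by simp
    have lt: "Suc r < lecnt J (j + 2)" using cnt_lt_lecnt[OF finJ, of p "j+2"] True p by simp
    have np: "nJ (Suc r) = p" using nthX_cnt[OF finJ, of p] True unfolding nJ_def by simp
    show ?thesis using lt np cc_Suc[of r] p c unfolding gT_def a_def by simp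
  next
    case False
    have z: "FF $$ (ix a, ix p) = 0"
    proof (cases "p \<in> J")
      case True
      then have "(a,p) \<notin> consec J" using False consec_iff[OF finJ] a by simp
      then show ?thesis using E2a a True by blast
    next
      case pK: False
      have "FF $$ (ix a, ix p) = (if (a,p) \<in> consec K then 1 else 0)" by (rule E1) (use a p pK in auto)
      moreover have "(a,p) \<notin> consec K" using consec_sub a by blast
      ultimately show ?thesis by simp
    qed
    have "\<not> (Suc r < lecnt J (j + 2) \<and> c = ix (nJ (Suc r)))"
    proof
      assume h: "Suc r < lecnt J (j + 2) \<and> c = ix (nJ (Suc r))"
      then have "nJ (Suc r) = p" using ix_inj nJ_props(5)[of "Suc r" "j+2"] p by metis
      then show False using False nJ_props(1,2)[of "Suc r" "j+2"] h by auto
    qed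
    then show ?thesis using z c unfolding gT_def by auto
  qed
  also have "\<dots> = (shm (lecnt J j) (lecnt J (j + 2)) * gT (j + 2)) $$ (r,c)"
    by (rule shm_left[OF gT_carrier r c, symmetric])
  finally show "(gT j * Mb j) $$ (r,c) = (shm (lecnt J j) (lecnt J (j + 2)) * gT (j + 2)) $$ (r,c)" .
qed auto

end

context Floc begin

lemma nK_inj: "c < lecnt K i \<Longrightarrow> k < lecnt K i \<Longrightarrow> ix (nK c) = ix (nK k) \<Longrightarrow> c = k"
  using nK_props ix_inj by metis

lemma nJ_inj: "c < lecnt J i \<Longrightarrow> k < lecnt J i \<Longrightarrow> ix (nJ c) = ix (nJ k) \<Longrightarrow> c = k"
  using nJ_props ix_inj by metis

lemma ex_inj:
  assumes u: "u \<in> carrier_vec (lecnt K i)" and z: "fS i *\<^sub>v u = 0\<^sub>v (V i)"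
  shows "u = 0\<^sub>v (lecnt K i)"
proof (rule eq_vecI)
  fix c assume "c < dim_vec (0\<^sub>v (lecnt K i) :: 'a vec)"
  then have c: "c < lecnt K i" by simp
  have "(fS i *\<^sub>v u) $ ix (nK c) = (\<Sum>k<lecnt K i. fS i $$ (ix (nK c), k) * u $ k)"
    by (rule mv_entry[OF fS_carrier u nK_props(4)[OF c]])
  also have "\<dots> = (if c < lecnt K i then fS i $$ (ix (nK c), c) * u $ c else 0)"
    by (rule sum_single_lt) (use c nK_props(4)[OF c] nK_inj[of c i] in \<open>auto simp: fS_def\<close>)
  also have "\<dots> = u $ c" using c nK_props(4)[OF c] by (simp add: fS_def)
  finally have "u $ c = (fS i *\<^sub>v u) $ ix (nK c)" by simp
  also have "\<dots> = 0" using z nK_props(4)[OF c] by simp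
  finally show "u $ c = 0\<^sub>v (lecnt K i) $ c" using c by simp
qed (use u in simp)

lemma ex_surj:
  assumes w: "w \<in> carrier_vec (lecnt J i)"
  shows "\<exists>v\<in>carrier_vec (V i). gT i *\<^sub>v v = w"
proof -
  define v where "v = vec (V i) (\<lambda>k. \<Sum>r'<lecnt J i. if k = ix (nJ r') then w $ r' / cc r' else 0)"
  have vc: "v \<in> carrier_vec (V i)" unfolding v_def by simp
  have "gT i *\<^sub>v v = w"
  proof (rule eq_vecI)
    fix r assume "r < dim_vec w"
    then have r: "r < lecnt J i" using w by simp
    have ccr: "cc r \<noteq> 0" using cc_nz r lecnt_le_card[OF finJ, of i] by simp
    have vr: "v $ ix (nJ r) = w $ r / cc r"
    proof -
      have "v $ ix (nJ r) = (\<Sum>r'<lecnt J i. if ix (nJ r) = ix (nJ r') then w $ r' / cc r' else 0)"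
        unfolding v_def using nJ_props(4)[OF r] by simp
      also have "\<dots> = (if r < lecnt J i then (if ix (nJ r) = ix (nJ r) then w $ r / cc r else 0) else 0)"
        by (rule sum_single_lt) (use nJ_inj[of r i] r in auto)
      finally show ?thesis using r by simp
    qed
    have "(gT i *\<^sub>v v) $ r = (\<Sum>k<V i. gT i $$ (r,k) * v $ k)"
      by (rule mv_entry[OF gT_carrier vc r])
    also have "\<dots> = (if ix (nJ r) < V i then gT i $$ (r, ix (nJ r)) * v $ ix (nJ r) else 0)"
      by (rule sum_single_lt) (use r in \<open>auto simp: gT_def\<close>)
    also have "\<dots> = w $ r" using nJ_props(4)[OF r] r vr ccr by (simp add: gT_def)
    finally show "(gT i *\<^sub>v v) $ r = w $ r" .
  qed (use w in simp)
  then show ?thesis using vc by blast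
qed

lemma gTfS: "gT i * fS i = 0\<^sub>m (lecnt J i) (lecnt K i)"
proof (rule eq_matI)
  fix r c assume "r < dim_row (0\<^sub>m (lecnt J i) (lecnt K i) :: 'a mat)" "c < dim_col (0\<^sub>m (lecnt J i) (lecnt K i) :: 'a mat)"
  then have r: "r < lecnt J i" and c: "c < lecnt K i" by auto
  have "(gT i * fS i) $$ (r,c) = (\<Sum>k<V i. gT i $$ (r,k) * fS i $$ (k,c))"
    by (rule mult_entry[OF gT_carrier fS_carrier r c])
  also have "\<dots> = (if ix (nJ r) < V i then gT i $$ (r, ix (nJ r)) * fS i $$ (ix (nJ r), c) else 0)"
    by (rule sum_single_lt) (use r in \<open>auto simp: gT_def\<close>)
  also have "\<dots> = 0"
  proof -
    have "ix (nJ r) \<noteq> ix (nK c)" using nJ_props(1,5)[OF r] nK_props(1,5)[OF c] ix_inj by auto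
    then show ?thesis using nJ_props(4)[OF r] c by (simp add: fS_def)
  qed
  finally show "(gT i * fS i) $$ (r,c) = 0\<^sub>m (lecnt J i) (lecnt K i) $$ (r,c)" using r c by simp
qed auto

lemma ex_ker:
  assumes v: "v \<in> carrier_vec (V i)"
  shows "gT i *\<^sub>v v = 0\<^sub>v (lecnt J i) \<longleftrightarrow> (\<exists>u\<in>carrier_vec (lecnt K i). v = fS i *\<^sub>v u)"
proof
  assume g: "gT i *\<^sub>v v = 0\<^sub>v (lecnt J i)"
  define u where "u = vec (lecnt K i) (\<lambda>c. v $ ix (nK c))"
  have uc: "u \<in> carrier_vec (lecnt K i)" unfolding u_def by simp
  have "v = fS i *\<^sub>v u"
  proof (rule eq_vecI)
    fix k assume "k < dim_vec (fS i *\<^sub>v u)"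
    then have k: "k < V i" by simp
    obtain a where a: "a \<in> S" "ix a = k" "a \<le> i" using ix_surj[OF k] by blast
    have fu: "(fS i *\<^sub>v u) $ k = (\<Sum>c<lecnt K i. fS i $$ (k,c) * u $ c)"
      by (rule mv_entry[OF fS_carrier uc k])
    show "v $ k = (fS i *\<^sub>v u) $ k"
    proof (cases "a \<in> K")
      case True
      have ca: "cnt K a < lecnt K i" using cnt_lt_lecnt[OF finK True] a by simp
      have na: "nK (cnt K a) = a" using nthX_cnt[OF finK True] unfolding nK_def .
      have "(\<Sum>c<lecnt K i. fS i $$ (k,c) * u $ c) = (if cnt K a < lecnt K i then fS i $$ (k, cnt K a) * u $ cnt K a else 0)"
      proof (rule sum_single_lt)
        fix c assume c: "c < lecnt K i" "c \<noteq> cnt K a"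
        have "k \<noteq> ix (nK c)"
        proof
          assume "k = ix (nK c)"
          then have "a = nK c" using a ix_inj nK_props(5)[OF c(1)] by metis
          then show False using c nK_props(2)[OF c(1)] by simp
        qed
        then show "fS i $$ (k,c) * u $ c = 0" using k c by (simp add: fS_def)
      qed
      also have "\<dots> = v $ k" using ca na k a by (simp add: fS_def u_def)
      finally show ?thesis using fu by simp
    next
      case False
      then have aJ: "a \<in> J" using a by simp
      have ra: "cnt J a < lecnt J i" using cnt_lt_lecnt[OF finJ aJ] a by simp
      have na: "nJ (cnt J a) = a" using nthX_cnt[OF finJ aJ] unfolding nJ_def .
      have "(\<Sum>c<lecnt K i. fS i $$ (k,c) * u $ c) = 0"
      proof (rule sum.neutral, rule ballI)
        fix c assume "c \<in> {..<lecnt K i}"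
        then have c: "c < lecnt K i" by simp
        have "k \<noteq> ix (nK c)"
        proof
          assume "k = ix (nK c)"
          then have "a = nK c" using a ix_inj nK_props(5)[OF c] by metis
          then show False using aJ nK_props(1)[OF c] by simp
        qed
        then show "fS i $$ (k,c) * u $ c = 0" using k c by (simp add: fS_def)
      qed
      moreover have "v $ k = 0"
      proof -
        have "(gT i *\<^sub>v v) $ cnt J a = (\<Sum>k'<V i. gT i $$ (cnt J a,k') * v $ k')"
          by (rule mv_entry[OF gT_carrier v ra])
        also have "\<dots> = (if ix (nJ (cnt J a)) < V i then gT i $$ (cnt J a, ix (nJ (cnt J a))) * v $ ix (nJ (cnt J a)) else 0)"
          by (rule sum_single_lt) (use ra in \<open>auto simp: gT_def\<close>)
        also have "\<dots> = cc (cnt J a) * v $ k" using na a k ra by (simp add: gT_def)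
        finally have "cc (cnt J a) * v $ k = 0" using g ra by simp
        moreover have "cc (cnt J a) \<noteq> 0" using cc_nz ra lecnt_le_card[OF finJ, of i] by simp
        ultimately show ?thesis by simp
      qed
      ultimately show ?thesis using fu by simp
    qed
  qed (use v in simp)
  then show "\<exists>u\<in>carrier_vec (lecnt K i). v = fS i *\<^sub>v u" using uc by blast
next
  assume "\<exists>u\<in>carrier_vec (lecnt K i). v = fS i *\<^sub>v u"
  then obtain u where u: "u \<in> carrier_vec (lecnt K i)" "v = fS i *\<^sub>v u" by blast
  have "gT i *\<^sub>v v = (gT i * fS i) *\<^sub>v u"
    using u assoc_mult_mat_vec[OF gT_carrier fS_carrier u(1)] by simp
  also have "\<dots> = 0\<^sub>m (lecnt J i) (lecnt K i) *\<^sub>v u" by (simp add: gTfS)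
  also have "\<dots> = 0\<^sub>v (lecnt J i)"
    by (rule eq_vecI) (use u in \<open>auto simp: scalar_prod_def\<close>)
  finally show "gT i *\<^sub>v v = 0\<^sub>v (lecnt J i)" .
qed

end

context Floc begin

lemma nonsplit:
  assumes hom: "is_hom t (Delta J) (Mx t d FF) s"
    and sec: "\<forall>i\<in>{1..t}. gT i * s i = 1\<^sub>m (rdim (Delta J) i)"
  shows False
proof -
  have e1: "1 \<le> (1::nat)" "1 \<le> e" using e2 by auto
  define bb where "bb = b 1"
  have bb: "3 \<le> bb" "bb + 2 \<le> t" "bb \<in> S" "bb - 1 \<in> J" "bb + 2 \<in> J"
    using bprops[OF e1] bm1_J[OF e1] bm2_J[OF e1] unfolding bb_def by auto
  have cons: "(bb - 1, bb + 2) \<in> consec J" using bpair_consecJ[OF e1] unfolding bb_def .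
  define h where "h = cnt J (bb + 2)"
  have h: "h = Suc (cnt J (bb - 1))" using consec_iff[OF finJ] cons unfolding h_def by simp
  have hlt: "h < lecnt J (bb + 2)" using cnt_lt_lecnt[OF finJ bb(5)] unfolding h_def by simp
  have h1: "h - 1 < lecnt J (bb - 1)" using cnt_lt_lecnt[OF finJ bb(4)] h by simp
  have monoJ: "lecnt J (bb - 1) \<le> lecnt J bb" by (rule lecnt_mono[OF finJ]) simp
  have h1': "h - 1 < lecnt J bb" using h1 monoJ by simp
  have car: "\<And>i. i \<in> {1..t} \<Longrightarrow> s i \<in> carrier_mat (V i) (lecnt J i)"
    using hom unfolding is_hom_def Delta_simps Mx_simps by auto
  have sb: "s bb \<in> carrier_mat (V bb) (lecnt J bb)" using car bb by auto
  have "bb - 1 \<in> {1..t}" using bb by auto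
  then have sb1: "s (bb - 1) \<in> carrier_mat (V (bb - 1)) (lecnt J (bb - 1))" by (rule car)
  have sb2: "s (bb + 2) \<in> carrier_mat (V (bb + 2)) (lecnt J (bb + 2))" using car bb by auto
  have ixb: "ix bb < V bb" using ixV bb by simp
  have ixb1: "\<not> ix bb < V (bb - 1)" using ixV bb by simp
  have ah: "\<forall>i. 1 \<le> i \<and> i + 1 \<le> t \<longrightarrow> s (Suc i) * ralpha (Delta J) i = ralpha (Mx t d FF) i * s i"
    using hom unfolding is_hom_def by blast
  have "1 \<le> bb - 1 \<and> bb - 1 + 1 \<le> t" using bb by auto
  then have alpha0: "s (Suc (bb - 1)) * ralpha (Delta J) (bb - 1) = ralpha (Mx t d FF) (bb - 1) * s (bb - 1)"
    using ah by blast
  have sbb: "Suc (bb - 1) = bb" using bb by simp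
  have alpha: "s bb * ralpha (Delta J) (bb - 1) = ralpha (Mx t d FF) (bb - 1) * s (bb - 1)"
    using alpha0 unfolding sbb .
  then have alpha': "s bb * incl_mat (lecnt J bb) (lecnt J (bb - 1)) = incl_mat (V bb) (V (bb - 1)) * s (bb - 1)"
    unfolding Delta_simps Mx_simps sbb .
  have z: "s bb $$ (ix bb, h - 1) = 0"
  proof -
    have "s bb $$ (ix bb, h - 1) = (s bb * incl_mat (lecnt J bb) (lecnt J (bb - 1))) $$ (ix bb, h - 1)"
      by (rule incl_right[OF sb monoJ ixb h1, symmetric])
    also have "\<dots> = (incl_mat (V bb) (V (bb - 1)) * s (bb - 1)) $$ (ix bb, h - 1)" using alpha' by simp
    also have "\<dots> = 0" using incl_left[OF sb1 ixb h1] ixb1 by simp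
    finally show ?thesis .
  qed
  have beta: "s bb * rbeta (Delta J) bb = rbeta (Mx t d FF) bb * s (bb + 2)"
    using hom bb unfolding is_hom_def by auto
  then have beta': "s bb * shm (lecnt J bb) (lecnt J (bb + 2)) = Mb bb * s (bb + 2)"
    unfolding Delta_simps Mx_simps Mb_def by simp
  have "(s bb * shm (lecnt J bb) (lecnt J (bb + 2))) $$ (ix bb, h) = s bb $$ (ix bb, h - 1)"
    using shm_right[OF sb ixb hlt] h h1' by simp
  then have lhs: "(Mb bb * s (bb + 2)) $$ (ix bb, h) = 0" using beta' z by simp
  have "(Mb bb * s (bb + 2)) $$ (ix bb, h) = (\<Sum>k<V (bb + 2). Mb bb $$ (ix bb, k) * s (bb + 2) $$ (k, h))"
    by (rule mult_entry[OF Mb_carrier sb2 ixb hlt])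
  also have "\<dots> = (if ix (bb + 2) < V (bb + 2) then Mb bb $$ (ix bb, ix (bb + 2)) * s (bb + 2) $$ (ix (bb + 2), h) else 0)"
  proof (rule sum_single_lt)
    fix k assume k: "k < V (bb + 2)" "k \<noteq> ix (bb + 2)"
    obtain q where q: "q \<in> S" "ix q = k" "q \<le> bb + 2" using ix_surj[OF k(1)] by blast
    have "q \<noteq> bb + 2" using q k by auto
    then have "FF $$ (ix bb, ix q) = 0" using E4[OF q(1)] q(3) unfolding bb_def by simp
    then show "Mb bb $$ (ix bb, k) * s (bb + 2) $$ (k, h) = 0" using ixb k q unfolding Mb_def by simp
  qed
  also have "\<dots> = s (bb + 2) $$ (ix (bb + 2), h)"
  proof -
    have "ix (bb + 2) < V (bb + 2)" using ixV bb J_sub_S by simp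
    moreover have "FF $$ (ix bb, ix (bb + 2)) = 1" using E4[of "bb + 2"] bb J_sub_S unfolding bb_def by simp
    ultimately show ?thesis using ixb unfolding Mb_def by simp
  qed
  finally have s0: "s (bb + 2) $$ (ix (bb + 2), h) = 0" using lhs by simp
  have nh: "nJ h = bb + 2" using nthX_cnt[OF finJ bb(5)] unfolding nJ_def h_def .
  have "(gT (bb + 2) * s (bb + 2)) $$ (h, h) = (\<Sum>k<V (bb + 2). gT (bb + 2) $$ (h, k) * s (bb + 2) $$ (k, h))"
    by (rule mult_entry[OF gT_carrier sb2 hlt hlt])
  also have "\<dots> = (if ix (nJ h) < V (bb + 2) then gT (bb + 2) $$ (h, ix (nJ h)) * s (bb + 2) $$ (ix (nJ h), h) else 0)"
    by (rule sum_single_lt) (use hlt in \<open>auto simp: gT_def\<close>)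
  also have "\<dots> = 0" using s0 nh by simp
  finally have "(gT (bb + 2) * s (bb + 2)) $$ (h, h) = 0" .
  moreover have "(gT (bb + 2) * s (bb + 2)) $$ (h, h) = 1"
    using sec bb hlt unfolding Delta_simps by auto
  ultimately show False by simp
qed

lemma FF_nilp: "FF \<in> nilp t d"
  unfolding nilp_def
proof (intro CollectI conjI allI impI)
  show "FF \<in> carrier_mat (nvec t d) (nvec t d)" using FF_carrier nvec_eq by simp
  fix i and v :: "'a vec" assume iv: "inV t d i v"
  then have v: "v \<in> carrier_vec n" and vz: "\<And>r. r < n \<Longrightarrow> V i \<le> r \<Longrightarrow> v $ r = 0"
    unfolding inV_def nvec_eq vdim_eq by auto
  show "inV t d (i - 2) (FF *\<^sub>v v)"
    unfolding inV_def nvec_eq vdim_eq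
  proof (intro conjI allI impI)
    show "FF *\<^sub>v v \<in> carrier_vec n" using FF_carrier v by simp
    fix r assume r: "r < n" "V (i - 2) \<le> r"
    have "r \<in> ix ` S" using cnt_image[OF finS] r by auto
    then obtain a where a: "a \<in> S" "ix a = r" by blast
    have ai: "\<not> a \<le> i - 2" using ixV[OF a(1), of "i - 2"] a r by simp
    have "(FF *\<^sub>v v) $ r = (\<Sum>c<n. FF $$ (r,c) * v $ c)"
      by (rule mv_entry[OF FF_carrier v r(1)])
    also have "\<dots> = 0"
    proof (rule sum.neutral, rule ballI)
      fix c assume "c \<in> {..<n}"
      then have c: "c < n" by simp
      show "FF $$ (r,c) * v $ c = 0"
      proof (cases "V i \<le> c")
        case True then show ?thesis using vz c by simp
      next
        case False
        have "c \<in> ix ` S" using cnt_image[OF finS] c by auto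
        then obtain p where p: "p \<in> S" "ix p = c" by blast
        have pi: "p \<le> i" using ixV[OF p(1), of i] p False by simp
        have "FF $$ (ix a, ix p) = 0"
        proof (rule ccontr)
          assume "FF $$ (ix a, ix p) \<noteq> 0"
          then have "a + 2 \<le> p" using E5 a p by blast
          then show False using ai pi by simp
        qed
        then show ?thesis using a p by simp
      qed
    qed
    finally show "(FF *\<^sub>v v) $ r = 0" .
  qed
qed

lemma main:
  "FF \<in> nilp t d \<and>
    (\<exists>f g. short_exact t (Delta K) (Mx t d FF) (Delta J) f g \<and> \<not> splits t (Mx t d FF) (Delta J) g)"
proof (intro conjI exI)
  show "FF \<in> nilp t d" by (rule FF_nilp)
  have h1: "is_hom t (Delta K) (Mx t d FF) fS"
    unfolding is_hom_def Delta_simps Mx_simps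
    using fS_carrier fS_alpha fS_beta unfolding Mb_def by auto
  have h2: "is_hom t (Mx t d FF) (Delta J) gT"
    unfolding is_hom_def Delta_simps Mx_simps
    using gT_carrier gT_alpha gT_beta unfolding Mb_def by auto
  have A: "\<forall>i\<in>{1..t}. (\<forall>u\<in>carrier_vec (lecnt K i). fS i *\<^sub>v u = 0\<^sub>v (V i) \<longrightarrow> u = 0\<^sub>v (lecnt K i)) \<and>
      (\<forall>w\<in>carrier_vec (lecnt J i). \<exists>v\<in>carrier_vec (V i). gT i *\<^sub>v v = w) \<and>
      (\<forall>v\<in>carrier_vec (V i). (gT i *\<^sub>v v = 0\<^sub>v (lecnt J i)) = (\<exists>u\<in>carrier_vec (lecnt K i). v = fS i *\<^sub>v u))"
    using ex_inj ex_surj ex_ker by blast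
  show "short_exact t (Delta K) (Mx t d FF) (Delta J) fS gT"
    unfolding short_exact_def Delta_simps Mx_simps using h1 h2 A by blast
  show "\<not> splits t (Mx t d FF) (Delta J) gT"
    unfolding splits_def using nonsplit by blast
qed

end

theorem lemma7p3:
  fixes t :: nat and d :: "nat \<Rightarrow> nat" and tt :: "nat \<Rightarrow> 'a::field"
  assumes "alg_closed TYPE('a)"
    and "thin t d"
    and "e_of t d \<ge> 2"
    and "\<forall>m\<in>{2..e_of t d}. tt m \<noteq> 0"
  shows "Fmat t d tt \<in> nilp t d \<and>
    (\<exists>f g. short_exact t (Delta (supp t d - J_of t d)) (Mx t d (Fmat t d tt)) (Delta (J_of t d)) f g
           \<and> \<not> splits t (Mx t d (Fmat t d tt)) (Delta (J_of t d)) g)"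
proof -
  interpret Floc t d tt
    by unfold_locales (use assms in auto)
  show ?thesis by (rule main)
qed

end
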